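(* Assume that $q$ is not a root of unity. Then the center $Z(\Delta)$ is generated (as an $\mathbb F$-algebra) by $\Omega,\alpha,\beta,\gamma$.
   Context: Let $\mathbb F$ be a field and fix a nonzero $q\in\mathbb F$ with $q^4\neq 1$. The universal Askey--Wilson algebra $\Delta$ is the associative $\mathbb F$-algebra with 1 with generators $A,B,C$ subject to the relations that each of $A+\frac{qBC-q^{-1}CB}{q^2-q^{-2}}$, $B+\frac{qCA-q^{-1}AC}{q^2-q^{-2}}$, $C+\frac{qAB-q^{-1}BA}{q^2-q^{-2}}$ is central; $\alpha,\beta,\gamma$ denote these three central elements (in order) each multiplied by $q+q^{-1}$. Let $\Omega = qABC+q^2A^2+q^{-2}B^2+q^2C^2-qA\alpha-q^{-1}B\beta-qC\gamma$. *)

theory Defs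
  imports Main
begin

text \<open>Free associative algebra over a field on generators A, B, C, represented as
  finitely supported functions from words to coefficients.\<close>

datatype gen = GA | GB | GC

type_synonym 'a ncpoly = "gen list \<Rightarrow> 'a"

definition fin :: "'a::zero ncpoly \<Rightarrow> bool" where
  "fin p \<longleftrightarrow> finite {w. p w \<noteq> 0}"

definition nc_add :: "'a::field ncpoly \<Rightarrow> 'a ncpoly \<Rightarrow> 'a ncpoly" (infixl "\<oplus>" 65) where
  "p \<oplus> q = (\<lambda>w. p w + q w)"

definition nc_diff :: "'a::field ncpoly \<Rightarrow> 'a ncpoly \<Rightarrow> 'a ncpoly" (infixl "\<ominus>" 65) where
  "p \<ominus> q = (\<lambda>w. p w - q w)"

definition nc_smult :: "'a::field \<Rightarrow> 'a ncpoly \<Rightarrow> 'a ncpoly" (infixr "\<cdot>" 75) where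
  "c \<cdot> p = (\<lambda>w. c * p w)"

definition nc_mult :: "'a::field ncpoly \<Rightarrow> 'a ncpoly \<Rightarrow> 'a ncpoly" (infixl "\<otimes>" 70) where
  "p \<otimes> q = (\<lambda>w. \<Sum>i\<le>length w. p (take i w) * q (drop i w))"

definition nc_zero :: "'a::field ncpoly" where
  "nc_zero = (\<lambda>w. 0)"

definition nc_one :: "'a::field ncpoly" where
  "nc_one = (\<lambda>w. if w = [] then 1 else 0)"

definition nc_var :: "gen \<Rightarrow> 'a::field ncpoly" where
  "nc_var g = (\<lambda>w. if w = [g] then 1 else 0)"

abbreviation "gA \<equiv> nc_var GA"
abbreviation "gB \<equiv> nc_var GB"
abbreviation "gC \<equiv> nc_var GC"

text \<open>The three elements required to be central in the universal Askey--Wilson algebra,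
  multiplied by q + q^{-1}: alpha, beta, gamma (as elements of the free algebra).\<close>

definition aw_alpha :: "'a::field \<Rightarrow> 'a ncpoly" where
  "aw_alpha q = (q + inverse q) \<cdot> (gA \<oplus> (inverse (q^2 - inverse (q^2))) \<cdot>
       ((q \<cdot> (gB \<otimes> gC)) \<ominus> (inverse q \<cdot> (gC \<otimes> gB))))"

definition aw_beta :: "'a::field \<Rightarrow> 'a ncpoly" where
  "aw_beta q = (q + inverse q) \<cdot> (gB \<oplus> (inverse (q^2 - inverse (q^2))) \<cdot>
       ((q \<cdot> (gC \<otimes> gA)) \<ominus> (inverse q \<cdot> (gA \<otimes> gC))))"

definition aw_gamma :: "'a::field \<Rightarrow> 'a ncpoly" where
  "aw_gamma q = (q + inverse q) \<cdot> (gC \<oplus> (inverse (q^2 - inverse (q^2))) \<cdot>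
       ((q \<cdot> (gA \<otimes> gB)) \<ominus> (inverse q \<cdot> (gB \<otimes> gA))))"

definition aw_Omega :: "'a::field \<Rightarrow> 'a ncpoly" where
  "aw_Omega q = (q \<cdot> (gA \<otimes> gB \<otimes> gC)) \<oplus> (q^2 \<cdot> (gA \<otimes> gA)) \<oplus> (inverse (q^2) \<cdot> (gB \<otimes> gB))
      \<oplus> (q^2 \<cdot> (gC \<otimes> gC)) \<ominus> (q \<cdot> (gA \<otimes> aw_alpha q)) \<ominus> (inverse q \<cdot> (gB \<otimes> aw_beta q))
      \<ominus> (q \<cdot> (gC \<otimes> aw_gamma q))"

text \<open>Two-sided ideal of the free algebra generated by the commutators of the elements
  alpha, beta, gamma with the generators; Delta is the free algebra modulo this ideal.\<close>
inductive_set aw_ideal :: "'a::field \<Rightarrow> 'a ncpoly set" for q :: "'a" where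
  rel: "X \<in> {aw_alpha q, aw_beta q, aw_gamma q} \<Longrightarrow> g \<in> {gA, gB, gC} \<Longrightarrow>
          (X \<otimes> g) \<ominus> (g \<otimes> X) \<in> aw_ideal q"
| zero: "nc_zero \<in> aw_ideal q"
| add: "x \<in> aw_ideal q \<Longrightarrow> y \<in> aw_ideal q \<Longrightarrow> x \<oplus> y \<in> aw_ideal q"
| lmult: "fin p \<Longrightarrow> x \<in> aw_ideal q \<Longrightarrow> p \<otimes> x \<in> aw_ideal q"
| rmult: "fin p \<Longrightarrow> x \<in> aw_ideal q \<Longrightarrow> x \<otimes> p \<in> aw_ideal q"

text \<open>Representatives (in the free algebra) of central elements of Delta.\<close>
definition aw_center :: "'a::field \<Rightarrow> 'a ncpoly set" where
  "aw_center q = {x. fin x \<and> (\<forall>y. fin y \<longrightarrow> (x \<otimes> y) \<ominus> (y \<otimes> x) \<in> aw_ideal q)}"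

inductive_set gen_subalg :: "'a::field \<Rightarrow> 'a ncpoly set" for q :: "'a" where
  scal: "c \<cdot> nc_one \<in> gen_subalg q"
| Om: "aw_Omega q \<in> gen_subalg q"
| al: "aw_alpha q \<in> gen_subalg q"
| be: "aw_beta q \<in> gen_subalg q"
| ga: "aw_gamma q \<in> gen_subalg q"
| add: "x \<in> gen_subalg q \<Longrightarrow> y \<in> gen_subalg q \<Longrightarrow> x \<oplus> y \<in> gen_subalg q"
| mult: "x \<in> gen_subalg q \<Longrightarrow> y \<in> gen_subalg q \<Longrightarrow> x \<otimes> y \<in> gen_subalg q"

end

theory Submission
  imports Defs "HOL-Library.Function_Algebras"
begin


lemma nc_add_eq: "p \<oplus> q = p + q" by (auto simp: nc_add_def)
lemma nc_diff_eq: "p \<ominus> q = p - q" by (auto simp: nc_diff_def)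
lemma nc_zero_eq: "nc_zero = 0" by (auto simp: nc_zero_def)

definition word :: "gen list \<Rightarrow> 'a::field ncpoly" where
  "word u = (\<lambda>w. if w = u then 1 else 0)"

lemma nc_var_word: "nc_var g = word [g]" by (simp add: nc_var_def word_def)
lemma nc_one_word: "nc_one = word []" by (simp add: nc_one_def word_def)

lemma mult_apply: "(p \<otimes> q) w = (\<Sum>i\<le>length w. p (take i w) * q (drop i w))"
  by (simp add: nc_mult_def)

lemma word_mult_apply: "(word u \<otimes> p) w = (if take (length u) w = u then p (drop (length u) w) else 0)"
proof -
  have "(word u \<otimes> p) w = (\<Sum>i\<le>length w. (if take i w = u then p (drop i w) else 0))"
    by (auto simp: mult_apply word_def intro!: sum.cong)
  also have "\<dots> = (if take (length u) w = u then p (drop (length u) w) else 0)"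
  proof (cases "take (length u) w = u")
    case True
    then have lu: "length u \<le> length w" by (metis length_take min.absorb_iff2 nat_le_linear take_all)
    have "(\<Sum>i\<le>length w. (if take i w = u then p (drop i w) else 0)) =
          (\<Sum>i\<in>{length u}. (if take i w = u then p (drop i w) else 0))"
      apply (rule sum.mono_neutral_right)
      using lu by auto
    then show ?thesis using True by simp
  next
    case False
    have "\<And>i. take i w = u \<Longrightarrow> False"
      using False by (metis length_take min.absorb_iff2 nat_le_linear take_all take_take)
    then show ?thesis using False by (auto intro!: sum.neutral)
  qed
  finally show ?thesis .
qed

lemma mult_word_apply: "(p \<otimes> word u) w = (if drop (length w - length u) w = u then p (take (length w - length u) w) else 0)"
proof -
  have "(p \<otimes> word u) w = (\<Sum>i\<le>length w. (if drop i w = u then p (take i w) else 0))"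
    by (simp add: mult_apply word_def if_distrib cong: if_cong)
  also have "\<dots> = (if drop (length w - length u) w = u then p (take (length w - length u) w) else 0)"
  proof (cases "drop (length w - length u) w = u")
    case True
    have "(\<Sum>i\<le>length w. (if drop i w = u then p (take i w) else 0)) =
          (\<Sum>i\<in>{length w - length u}. (if drop i w = u then p (take i w) else 0))"
      apply (rule sum.mono_neutral_right)
      using True by auto
    then show ?thesis using True by simp
  next
    case False
    have "\<And>i. i \<le> length w \<Longrightarrow> drop i w = u \<Longrightarrow> False"
      using False by (metis diff_diff_cancel length_drop)
    then show ?thesis using False by (auto intro!: sum.neutral)
  qed
  finally show ?thesis .
qed

lemma word_mult_word: "word u \<otimes> word v = word (u @ v)"
  by (rule ext) (auto simp add: word_mult_apply append_eq_conv_conj simp del: word_def, auto simp: word_def,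
    metis append_take_drop_id)

lemma mult_assoc: "(p \<otimes> q) \<otimes> r = p \<otimes> (q \<otimes> r)"
proof (rule ext)
  fix w :: "gen list"
  define n where "n = length w"
  define g where "g = (\<lambda>j l. p (take j w) * q (take l (drop j w)) * r (drop (j + l) w))"
  have "((p \<otimes> q) \<otimes> r) w = (\<Sum>k\<le>n. \<Sum>j\<le>k. g j (k - j))"
    unfolding mult_apply n_def g_def
    by (auto simp: sum_distrib_right min_def take_drop intro!: sum.cong)
  also have "\<dots> = (\<Sum>(j,l)\<in>{(j,l). j + l \<le> n}. g j l)"
    by (rule sum.triangle_reindex_eq[symmetric])
  also have "{(j,l). j + l \<le> n} = Sigma {..n} (\<lambda>j. {..n - j})" by auto
  also have "(\<Sum>(j,l)\<in>Sigma {..n} (\<lambda>j. {..n - j}). g j l) = (\<Sum>j\<le>n. \<Sum>l\<le>n - j. g j l)"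
    by (rule sum.Sigma[symmetric]) auto
  also have "\<dots> = (p \<otimes> (q \<otimes> r)) w"
    unfolding mult_apply n_def g_def
    by (auto simp: sum_distrib_left mult.assoc add.commute intro!: sum.cong)
  finally show "((p \<otimes> q) \<otimes> r) w = (p \<otimes> (q \<otimes> r)) w" .
qed


lemma sum_fun_apply: "(sum f S) x = (\<Sum>i\<in>S. f i x)"
  by (induction S rule: infinite_finite_induct) auto

lemma diff_fun_apply: "(f - g) x = f x - g x" by simp
lemma neg_fun_apply: "(- f) x = - f x" by simp

lemma smult_apply: "(c \<cdot> p) w = c * p w" by (simp add: nc_smult_def)

lemma mult_add_left: "(p + q) \<otimes> r = p \<otimes> r + q \<otimes> r"
  by (rule ext) (simp add: mult_apply distrib_right sum.distrib)
lemma mult_add_right: "r \<otimes> (p + q) = r \<otimes> p + r \<otimes> q"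
  by (rule ext) (simp add: mult_apply distrib_left sum.distrib)
lemma mult_diff_left: "(p - q) \<otimes> r = p \<otimes> r - q \<otimes> r"
  by (rule ext) (simp add: mult_apply left_diff_distrib sum_subtractf)
lemma mult_diff_right: "r \<otimes> (p - q) = r \<otimes> p - r \<otimes> q"
  by (rule ext) (simp add: mult_apply right_diff_distrib sum_subtractf)
lemma mult_smult_left: "(c \<cdot> p) \<otimes> r = c \<cdot> (p \<otimes> r)"
  by (rule ext) (simp add: mult_apply smult_apply sum_distrib_left mult.assoc)
lemma mult_smult_right: "r \<otimes> (c \<cdot> p) = c \<cdot> (r \<otimes> p)"
  by (rule ext) (simp add: mult_apply smult_apply sum_distrib_left mult.left_commute)
lemma mult_zero_left: "0 \<otimes> r = 0"
  by (rule ext) (simp add: mult_apply)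
lemma mult_zero_right: "r \<otimes> 0 = 0"
  by (rule ext) (simp add: mult_apply)
lemma mult_zero_left': "(\<lambda>a. 0) \<otimes> r = (\<lambda>a. 0)"
  by (rule ext) (simp add: mult_apply)
lemma mult_zero_right': "r \<otimes> (\<lambda>a. 0) = (\<lambda>a. 0)"
  by (rule ext) (simp add: mult_apply)
lemma mult_sum_left: "(sum f S) \<otimes> r = (\<Sum>i\<in>S. f i \<otimes> r)"
proof (induction S rule: infinite_finite_induct)
  case (insert x F) then show ?case by (metis mult_add_left sum.insert)
qed (simp_all add: mult_zero_left mult_zero_left')
lemma mult_sum_right: "r \<otimes> (sum f S) = (\<Sum>i\<in>S. r \<otimes> f i)"
proof (induction S rule: infinite_finite_induct)
  case (insert x F) then show ?case by (metis mult_add_right sum.insert)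
qed (simp_all add: mult_zero_right mult_zero_right')
lemma mult_one_left: "nc_one \<otimes> p = p"
  by (rule ext) (simp add: nc_one_word word_mult_apply)
lemma mult_one_right: "p \<otimes> nc_one = p"
  by (rule ext) (simp add: nc_one_word mult_word_apply)

lemma smult_add: "c \<cdot> (p + q) = c \<cdot> p + c \<cdot> q"
  by (rule ext) (simp add: smult_apply distrib_left)
lemma smult_diff: "c \<cdot> (p - q) = c \<cdot> p - c \<cdot> q"
  by (rule ext) (simp add: smult_apply right_diff_distrib)
lemma smult_smult: "c \<cdot> (d \<cdot> p) = (c * d) \<cdot> p"
  by (rule ext) (simp add: smult_apply)
lemma smult_one: "1 \<cdot> p = p"
  by (rule ext) (simp add: smult_apply)
lemma smult_zero: "0 \<cdot> p = 0"
  by (rule ext) (simp add: smult_apply)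
lemma smult_zero_right: "c \<cdot> 0 = 0"
  by (rule ext) (simp add: smult_apply)
lemma smult_sum: "c \<cdot> (sum f S) = (\<Sum>i\<in>S. c \<cdot> f i)"
  by (rule ext) (simp add: smult_apply sum_fun_apply sum_distrib_left)
lemma add_smult: "(c + d) \<cdot> p = c \<cdot> p + d \<cdot> p"
  by (rule ext) (simp add: smult_apply distrib_right)
lemma smult_minus1: "(-1) \<cdot> p = - p"
  by (rule ext) (simp add: smult_apply)

lemma fin_zero[simp]: "fin (0::'a::field ncpoly)" by (simp add: fin_def)
lemma fin_add[simp]: "fin p \<Longrightarrow> fin q \<Longrightarrow> fin (p + (q::'a::field ncpoly))"
  unfolding fin_def by (rule finite_subset[of _ "{w. p w \<noteq> 0} \<union> {w. q w \<noteq> 0}"]) auto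
lemma fin_neg[simp]: "fin p \<Longrightarrow> fin (- (p::'a::field ncpoly))"
  unfolding fin_def by simp
lemma fin_diff[simp]: "fin p \<Longrightarrow> fin q \<Longrightarrow> fin (p - (q::'a::field ncpoly))"
  unfolding fin_def by (rule finite_subset[of _ "{w. p w \<noteq> 0} \<union> {w. q w \<noteq> 0}"]) auto
lemma fin_smult[simp]: "fin p \<Longrightarrow> fin (c \<cdot> p)"
  unfolding fin_def by (rule finite_subset[of _ "{w. p w \<noteq> 0}"]) (auto simp: smult_apply)
lemma fin_word[simp]: "fin (word u)" by (simp add: fin_def word_def)
lemma fin_var[simp]: "fin (nc_var g)" by (simp add: nc_var_word)
lemma fin_one[simp]: "fin nc_one" by (simp add: nc_one_word)
lemma fin_sum[simp]: "(\<And>i. i \<in> S \<Longrightarrow> fin (f i)) \<Longrightarrow> fin (sum f S :: 'a::field ncpoly)"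
  by (induction S rule: infinite_finite_induct) auto
lemma fin_mult[simp]: assumes "fin p" "fin q" shows "fin (p \<otimes> q)"
proof -
  have "{w. (p \<otimes> q) w \<noteq> 0} \<subseteq> (\<lambda>(u,v). u @ v) ` ({w. p w \<noteq> 0} \<times> {w. q w \<noteq> 0})"
  proof
    fix w assume "w \<in> {w. (p \<otimes> q) w \<noteq> 0}"
    then obtain i where "p (take i w) * q (drop i w) \<noteq> 0"
      by (auto simp: mult_apply elim: sum.not_neutral_contains_not_neutral)
    then show "w \<in> (\<lambda>(u,v). u @ v) ` ({w. p w \<noteq> 0} \<times> {w. q w \<noteq> 0})"
      by (auto intro!: image_eqI[of _ _ "(take i w, drop i w)"])
  qed
  moreover have "finite ((\<lambda>(u,v). u @ v) ` ({w. p w \<noteq> 0} \<times> {w. q w \<noteq> 0}))"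
    using assms unfolding fin_def by auto
  ultimately show ?thesis unfolding fin_def by (rule finite_subset)
qed

lemma decomp: assumes "fin p" shows "p = (\<Sum>w\<in>{w. p w \<noteq> 0}. p w \<cdot> word w)"
proof (rule ext)
  fix u
  have "(\<Sum>w\<in>{w. p w \<noteq> 0}. p w \<cdot> word w) u = (\<Sum>w\<in>{w. p w \<noteq> 0}. if w = u then p w else 0)"
    by (auto simp: sum_fun_apply smult_apply word_def intro!: sum.cong)
  also have "\<dots> = p u" using assms by (simp add: fin_def sum.delta')
  finally show "p u = (\<Sum>w\<in>{w. p w \<noteq> 0}. p w \<cdot> word w) u" by simp
qed

lemma var_mult_word: "nc_var g \<otimes> word w = word (g # w)"
  by (simp add: nc_var_word word_mult_word)


declare nc_add_eq[simp] nc_diff_eq[simp] nc_zero_eq[simp]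

lemma fin_alpha[simp]: "fin (aw_alpha q)" by (simp add: aw_alpha_def)
lemma fin_beta[simp]: "fin (aw_beta q)" by (simp add: aw_beta_def)
lemma fin_gamma[simp]: "fin (aw_gamma q)" by (simp add: aw_gamma_def)
lemma fin_Omega[simp]: "fin (aw_Omega q)" by (simp add: aw_Omega_def)

lemma ideal_fin: "x \<in> aw_ideal q \<Longrightarrow> fin x"
proof (induction rule: aw_ideal.induct)
  case (rel X g)
  then have "fin X" "fin g" by auto
  then show ?case by (simp only: nc_diff_eq fin_diff fin_mult)
qed (simp_all only: nc_add_eq nc_zero_eq fin_add fin_mult fin_zero)

lemma ideal_0[simp]: "0 \<in> aw_ideal q"
  using aw_ideal.zero by simp

lemma ideal_add: "x \<in> aw_ideal q \<Longrightarrow> y \<in> aw_ideal q \<Longrightarrow> x + y \<in> aw_ideal q"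
  using aw_ideal.add by simp

lemma ideal_lmult: "fin p \<Longrightarrow> x \<in> aw_ideal q \<Longrightarrow> p \<otimes> x \<in> aw_ideal q"
  by (rule aw_ideal.lmult)
lemma ideal_rmult: "fin p \<Longrightarrow> x \<in> aw_ideal q \<Longrightarrow> x \<otimes> p \<in> aw_ideal q"
  by (rule aw_ideal.rmult)

lemma ideal_smult: "x \<in> aw_ideal q \<Longrightarrow> c \<cdot> x \<in> aw_ideal q"
proof -
  assume "x \<in> aw_ideal q"
  then have "(c \<cdot> nc_one) \<otimes> x \<in> aw_ideal q" by (intro ideal_lmult) auto
  then show ?thesis by (simp add: mult_smult_left mult_one_left)
qed

lemma ideal_neg: "x \<in> aw_ideal q \<Longrightarrow> - x \<in> aw_ideal q"
  using ideal_smult[of x q "-1"] by (simp add: smult_minus1)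

lemma ideal_diff: "x \<in> aw_ideal q \<Longrightarrow> y \<in> aw_ideal q \<Longrightarrow> x - y \<in> aw_ideal q"
  using ideal_add[OF _ ideal_neg] by (metis diff_conv_add_uminus)

lemma ideal_sum: "(\<And>i. i \<in> S \<Longrightarrow> f i \<in> aw_ideal q) \<Longrightarrow> sum f S \<in> aw_ideal q"
  by (induction S rule: infinite_finite_induct) (auto intro: ideal_add)

definition eqv :: "'a::field \<Rightarrow> 'a ncpoly \<Rightarrow> 'a ncpoly \<Rightarrow> bool" where
  "eqv q x y \<longleftrightarrow> x - y \<in> aw_ideal q"

lemma eqv_refl: "eqv q x x" by (simp add: eqv_def)
lemma eqv_sym: "eqv q x y \<Longrightarrow> eqv q y x"
  unfolding eqv_def by (drule ideal_neg) simp
lemma eqv_trans: "eqv q x y \<Longrightarrow> eqv q y z \<Longrightarrow> eqv q x z"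
  unfolding eqv_def by (drule (1) ideal_add) simp
lemma eqv_add: "eqv q x y \<Longrightarrow> eqv q x' y' \<Longrightarrow> eqv q (x + x') (y + y')"
  unfolding eqv_def by (drule (1) ideal_add) (simp add: algebra_simps)
lemma eqv_diff: "eqv q x y \<Longrightarrow> eqv q x' y' \<Longrightarrow> eqv q (x - x') (y - y')"
  unfolding eqv_def by (drule (1) ideal_diff) (simp add: algebra_simps)
lemma eqv_smult: "eqv q x y \<Longrightarrow> eqv q (c \<cdot> x) (c \<cdot> y)"
  unfolding eqv_def by (drule ideal_smult[where c=c]) (simp add: smult_diff)
lemma eqv_lmult: "fin p \<Longrightarrow> eqv q x y \<Longrightarrow> eqv q (p \<otimes> x) (p \<otimes> y)"
  unfolding eqv_def by (drule (1) ideal_lmult) (simp add: mult_diff_right)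
lemma eqv_rmult: "fin p \<Longrightarrow> eqv q x y \<Longrightarrow> eqv q (x \<otimes> p) (y \<otimes> p)"
  unfolding eqv_def by (drule (1) ideal_rmult) (simp add: mult_diff_left)
lemma eqv_sum: "(\<And>i. i \<in> S \<Longrightarrow> eqv q (f i) (g i)) \<Longrightarrow> eqv q (sum f S) (sum g S)"
  unfolding eqv_def by (drule ideal_sum) (simp add: sum_subtractf)
lemma eqv_fin: "eqv q x y \<Longrightarrow> fin y \<Longrightarrow> fin x"
  unfolding eqv_def by (drule ideal_fin) (metis diff_add_cancel fin_add)
lemma eqv_eq: "x = y \<Longrightarrow> eqv q x y" by (simp add: eqv_refl)

definition commutes :: "'a::field \<Rightarrow> 'a ncpoly \<Rightarrow> 'a ncpoly \<Rightarrow> bool" where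
  "commutes q x y \<longleftrightarrow> eqv q (x \<otimes> y) (y \<otimes> x)"

lemma commutes_words:
  assumes fx: "fin x" and g: "\<And>g. commutes q x (nc_var g)"
  shows "commutes q x (word w)"
proof (induction w)
  case Nil
  then show ?case by (simp add: commutes_def eqv_refl flip: nc_one_word add: mult_one_left mult_one_right)
next
  case (Cons a w)
  have "x \<otimes> word (a # w) = (x \<otimes> nc_var a) \<otimes> word w"
    by (simp add: mult_assoc var_mult_word)
  moreover have "word (a # w) \<otimes> x = nc_var a \<otimes> (word w \<otimes> x)"
    by (simp flip: mult_assoc add: var_mult_word)
  moreover have "eqv q ((x \<otimes> nc_var a) \<otimes> word w) ((nc_var a \<otimes> x) \<otimes> word w)"
    using g[of a] by (auto simp: commutes_def intro: eqv_rmult)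
  moreover have "eqv q (nc_var a \<otimes> (x \<otimes> word w)) (nc_var a \<otimes> (word w \<otimes> x))"
    using Cons by (auto simp: commutes_def intro: eqv_lmult)
  ultimately show ?case unfolding commutes_def by (metis eqv_trans mult_assoc)
qed

lemma commutes_all:
  assumes fx: "fin x" and g: "\<And>g. commutes q x (nc_var g)" and fy: "fin y"
  shows "commutes q x y"
proof -
  let ?S = "{w. y w \<noteq> 0}"
  have y: "y = (\<Sum>w\<in>?S. y w \<cdot> word w)" using decomp[OF fy] .
  have "eqv q (\<Sum>w\<in>?S. x \<otimes> (y w \<cdot> word w)) (\<Sum>w\<in>?S. (y w \<cdot> word w) \<otimes> x)"
    using commutes_words[OF fx g] 
    by (auto intro!: eqv_sum simp: mult_smult_left mult_smult_right commutes_def intro: eqv_smult)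
  then show ?thesis unfolding commutes_def
    by (subst (1 2) y) (simp add: mult_sum_left mult_sum_right)
qed

lemma center_of_gens:
  assumes "fin x" "\<And>g. commutes q x (nc_var g)"
  shows "x \<in> aw_center q"
  using commutes_all[OF assms] assms(1) unfolding aw_center_def commutes_def eqv_def by auto

lemma center_commutes: "x \<in> aw_center q \<Longrightarrow> fin y \<Longrightarrow> commutes q x y"
  unfolding aw_center_def commutes_def eqv_def by auto

lemma center_fin: "x \<in> aw_center q \<Longrightarrow> fin x"
  unfolding aw_center_def by auto

lemma center_add: assumes "x \<in> aw_center q" "y \<in> aw_center q" shows "x + y \<in> aw_center q"
proof (rule center_of_gens)
  show "fin (x + y)" using assms by (simp add: center_fin)
  fix g
  have "eqv q (x \<otimes> nc_var g) (nc_var g \<otimes> x)" "eqv q (y \<otimes> nc_var g) (nc_var g \<otimes> y)"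
    using assms by (auto intro!: center_commutes[unfolded commutes_def])
  then show "commutes q (x + y) (nc_var g)"
    unfolding commutes_def by (simp add: mult_add_left mult_add_right eqv_add)
qed

lemma center_mult: assumes "x \<in> aw_center q" "y \<in> aw_center q" shows "x \<otimes> y \<in> aw_center q"
proof (rule center_of_gens)
  show "fin (x \<otimes> y)" using assms by (simp add: center_fin)
  fix g
  have "eqv q (x \<otimes> (y \<otimes> nc_var g)) (x \<otimes> (nc_var g \<otimes> y))"
    using assms by (auto intro!: eqv_lmult center_commutes[unfolded commutes_def] simp: center_fin)
  moreover have "eqv q ((x \<otimes> nc_var g) \<otimes> y) ((nc_var g \<otimes> x) \<otimes> y)"
    using assms by (auto intro!: eqv_rmult center_commutes[unfolded commutes_def] simp: center_fin)
  ultimately show "commutes q (x \<otimes> y) (nc_var g)"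
    unfolding commutes_def by (metis eqv_trans mult_assoc)
qed

lemma center_scal: "c \<cdot> nc_one \<in> aw_center q"
  by (rule center_of_gens) (auto simp: commutes_def mult_smult_left mult_smult_right
      mult_one_left mult_one_right eqv_refl)

lemma rel': "X \<in> {aw_alpha q, aw_beta q, aw_gamma q} \<Longrightarrow> g \<in> {gA, gB, gC} \<Longrightarrow>
          (X \<otimes> g) - (g \<otimes> X) \<in> aw_ideal q"
  using aw_ideal.rel by (metis nc_diff_eq)

lemma var_cases: "nc_var g \<in> {gA, gB, gC}" by (cases g) auto

lemma center_alpha: "aw_alpha q \<in> aw_center q"
  by (rule center_of_gens) (auto simp: commutes_def eqv_def intro!: rel' var_cases)
lemma center_beta: "aw_beta q \<in> aw_center q"
  by (rule center_of_gens) (auto simp: commutes_def eqv_def intro!: rel' var_cases)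
lemma center_gamma: "aw_gamma q \<in> aw_center q"
  by (rule center_of_gens) (auto simp: commutes_def eqv_def intro!: rel' var_cases)

lemma subalg_center: assumes "aw_Omega q \<in> aw_center q" shows "s \<in> gen_subalg q \<Longrightarrow> s \<in> aw_center q"
proof (induction rule: gen_subalg.induct)
  case (add x y) then show ?case by (metis nc_add_eq center_add)
qed (auto simp: assms center_alpha center_beta center_gamma center_scal center_mult)


datatype mon = M nat nat nat nat nat nat

fun deg :: "mon \<Rightarrow> nat" where "deg (M i j k r s t) = i + j + k"

type_synonym 'a vec = "mon \<Rightarrow> 'a"

definition vfin :: "'a::field vec \<Rightarrow> bool" where "vfin v \<longleftrightarrow> finite {m. v m \<noteq> 0}"
definition ev :: "mon \<Rightarrow> 'a::field vec" where "ev m = (\<lambda>m'. if m' = m then 1 else 0)"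
definition sv :: "'a::field \<Rightarrow> 'a vec \<Rightarrow> 'a vec" where "sv c v = (\<lambda>m. c * v m)"
definition ext :: "(mon \<Rightarrow> 'a::field vec) \<Rightarrow> 'a vec \<Rightarrow> 'a vec" where
  "ext f v = (\<lambda>m'. \<Sum>m\<in>{m. v m \<noteq> 0}. v m * f m m')"

fun mA :: "mon \<Rightarrow> mon" where "mA (M i j k r s t) = M (Suc i) j k r s t"
fun ma :: "mon \<Rightarrow> mon" where "ma (M i j k r s t) = M i j k (Suc r) s t"
fun mb :: "mon \<Rightarrow> mon" where "mb (M i j k r s t) = M i j k r (Suc s) t"
fun mc :: "mon \<Rightarrow> mon" where "mc (M i j k r s t) = M i j k r s (Suc t)"

definition shiftop :: "(mon \<Rightarrow> mon) \<Rightarrow> 'a::field vec \<Rightarrow> 'a vec" where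
  "shiftop f v = (\<lambda>m. if m \<in> range f then v (the_inv f m) else 0)"

lemma inj_mA: "inj mA" by (rule injI) (case_tac x; case_tac y; simp) 
lemma inj_ma: "inj ma" by (rule injI) (case_tac x; case_tac y; simp)
lemma inj_mb: "inj mb" by (rule injI) (case_tac x; case_tac y; simp)
lemma inj_mc: "inj mc" by (rule injI) (case_tac x; case_tac y; simp)

lemma shiftop_apply: "inj f \<Longrightarrow> shiftop f v (f m) = v m"
  by (simp add: shiftop_def the_inv_f_f)
lemma shiftop_apply0: "m \<notin> range f \<Longrightarrow> shiftop f v m = 0"
  by (simp add: shiftop_def)

lemma vfin_ev[simp]: "vfin (ev m)" by (simp add: vfin_def ev_def)
lemma vfin_zero[simp]: "vfin 0" by (simp add: vfin_def)
lemma vfin_add[simp]: "vfin u \<Longrightarrow> vfin w \<Longrightarrow> vfin (u + w :: 'a::field vec)"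
  unfolding vfin_def by (rule finite_subset[of _ "{m. u m \<noteq> 0} \<union> {m. w m \<noteq> 0}"]) auto
lemma vfin_diff[simp]: "vfin u \<Longrightarrow> vfin w \<Longrightarrow> vfin (u - (w :: 'a::field vec))"
  unfolding vfin_def by (rule finite_subset[of _ "{m. u m \<noteq> 0} \<union> {m. w m \<noteq> 0}"]) auto
lemma vfin_sv[simp]: "vfin u \<Longrightarrow> vfin (sv c (u :: 'a::field vec))"
  unfolding vfin_def sv_def by (rule finite_subset[of _ "{m. u m \<noteq> 0}"]) auto
lemma vfin_sum[simp]: "(\<And>i. i \<in> S \<Longrightarrow> vfin (f i)) \<Longrightarrow> vfin (sum f S :: 'a::field vec)"
  by (induction S rule: infinite_finite_induct) auto
lemma vfin_shiftop[simp]: assumes "inj f" "vfin v" shows "vfin (shiftop f v)"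
proof -
  have "{m. shiftop f v m \<noteq> 0} \<subseteq> f ` {m. v m \<noteq> 0}"
    by (auto simp: shiftop_def f_the_inv_into_f[OF assms(1)] intro!: image_eqI[of _ f "the_inv f _"])
  then show ?thesis using assms unfolding vfin_def by (meson finite_imageI finite_subset)
qed

lemma sv_apply: "sv c v m = c * v m" by (simp add: sv_def)

lemma ext_sum: assumes "vfin v" "{m. v m \<noteq> 0} \<subseteq> S" "finite S"
  shows "ext f v = (\<Sum>m\<in>S. sv (v m) (f m))"
proof (rule ext)
  fix m'
  have "ext f v m' = (\<Sum>m\<in>S. v m * f m m')"
    unfolding ext_def by (rule sum.mono_neutral_left) (use assms in auto)
  then show "ext f v m' = (\<Sum>m\<in>S. sv (v m) (f m)) m'" by (simp add: sum_fun_apply sv_apply)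
qed

lemma ext_ev[simp]: "ext f (ev m) = f m"
  by (rule ext) (simp add: ext_def ev_def)

lemma mult_if_delta: "(x::'a::field) * (if P then 1 else 0) = (if P then x else 0)" by simp

lemma vec_decomp: assumes "vfin v" shows "v = (\<Sum>m\<in>{m. v m \<noteq> 0}. sv (v m) (ev m))"
proof (rule ext)
  fix m'
  show "v m' = (\<Sum>m\<in>{m. v m \<noteq> 0}. sv (v m) (ev m)) m'"
  proof -
    have "(\<Sum>m\<in>{m. v m \<noteq> 0}. sv (v m) (ev m)) m' = (\<Sum>m\<in>{m. v m \<noteq> 0}. if m' = m then v m else 0)"
      by (auto simp: sum_fun_apply sv_apply ev_def intro!: sum.cong)
    also have "\<dots> = v m'" using assms by (simp add: vfin_def sum.delta)
    finally show ?thesis by simp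
  qed
qed

definition lin :: "('a::field vec \<Rightarrow> 'a vec) \<Rightarrow> bool" where
  "lin L \<longleftrightarrow> (\<forall>u w. vfin u \<longrightarrow> vfin w \<longrightarrow> L (u + w) = L u + L w) \<and>
             (\<forall>c u. vfin u \<longrightarrow> L (sv c u) = sv c (L u)) \<and> (\<forall>u. vfin u \<longrightarrow> vfin (L u))"

lemma lin_add: "lin L \<Longrightarrow> vfin u \<Longrightarrow> vfin w \<Longrightarrow> L (u + w) = L u + L w"
  by (simp add: lin_def)
lemma lin_sv: "lin L \<Longrightarrow> vfin u \<Longrightarrow> L (sv c u) = sv c (L u)"
  by (simp add: lin_def)
lemma lin_vfin: "lin L \<Longrightarrow> vfin u \<Longrightarrow> vfin (L u)"
  by (simp add: lin_def)
lemma sv_zero: "sv 0 (u::'a::field vec) = 0" by (rule ext) (simp add: sv_apply)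
lemma lin_zero: "lin L \<Longrightarrow> L 0 = 0"
  using lin_sv[of L 0 0] by (simp add: sv_zero)
lemma lin_sum: "lin L \<Longrightarrow> (\<And>i. i \<in> S \<Longrightarrow> vfin (f i)) \<Longrightarrow> L (sum f S) = (\<Sum>i\<in>S. L (f i))"
  by (induction S rule: infinite_finite_induct) (auto simp: lin_zero lin_add)
lemma lin_diff: "lin L \<Longrightarrow> vfin u \<Longrightarrow> vfin w \<Longrightarrow> L (u - w) = L u - L w"
proof -
  assume a: "lin L" "vfin u" "vfin w"
  have "L u = L ((u - w) + w)" by simp
  also have "\<dots> = L (u - w) + L w" using lin_add[OF a(1) vfin_diff[OF a(2,3)] a(3)] .
  finally show ?thesis by simp
qed

lemma lin_eqI: assumes "lin L" "lin L'" "\<And>m. L (ev m) = L' (ev m)" "vfin v"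
  shows "L v = L' v"
proof -
  have "L v = L (\<Sum>m\<in>{m. v m \<noteq> 0}. sv (v m) (ev m))" using vec_decomp[OF assms(4)] by simp
  also have "\<dots> = (\<Sum>m\<in>{m. v m \<noteq> 0}. sv (v m) (L (ev m)))"
    using assms(1) by (simp add: lin_sum lin_sv)
  also have "\<dots> = (\<Sum>m\<in>{m. v m \<noteq> 0}. sv (v m) (L' (ev m)))" using assms(3) by simp
  also have "\<dots> = L' (\<Sum>m\<in>{m. v m \<noteq> 0}. sv (v m) (ev m))"
    using assms(2) by (simp add: lin_sum lin_sv)
  also have "\<dots> = L' v" using vec_decomp[OF assms(4)] by simp
  finally show ?thesis .
qed

lemma lin_ext: assumes "\<And>m. vfin (f m)" shows "lin (ext f)"
proof -
  have fin: "vfin (ext f u)" if "vfin u" for u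
    using that assms by (simp add: ext_sum[OF that subset_refl] vfin_def[of u])
  have add: "ext f (u + w) = ext f u + ext f w" if "vfin u" "vfin w" for u w
  proof -
    let ?S = "{m. u m \<noteq> 0} \<union> {m. w m \<noteq> 0}"
    have "finite ?S" using that by (simp add: vfin_def)
    then show ?thesis using that
      by (subst (1 2 3) ext_sum[where S="?S"]) (auto simp: sum_fun_apply sum.distrib[symmetric]
          sv_def fun_eq_iff distrib_right)
  qed
  have sv: "ext f (sv c u) = sv c (ext f u)" if "vfin u" for c u
  proof -
    let ?S = "{m. u m \<noteq> 0}"
    have "finite ?S" using that by (simp add: vfin_def)
    have "ext f (sv c u) = (\<Sum>m\<in>?S. sv (sv c u m) (f m))"
      by (rule ext_sum) (use that \<open>finite ?S\<close> in \<open>auto simp: sv_apply\<close>)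
    moreover have "ext f u = (\<Sum>m\<in>?S. sv (u m) (f m))"
      by (rule ext_sum) (use that \<open>finite ?S\<close> in auto)
    ultimately show ?thesis
      by (auto simp: sv_def fun_eq_iff sum_fun_apply sum_distrib_left mult.assoc)
  qed
  show ?thesis using fin add sv by (simp add: lin_def)
qed

lemma lin_shiftop: assumes "inj f" shows "lin (shiftop f)"
  using assms unfolding lin_def
  by (auto simp: vfin_shiftop) (auto simp: shiftop_def sv_def fun_eq_iff)

lemma lin_comp: "lin L \<Longrightarrow> lin L' \<Longrightarrow> lin (L \<circ> L')"
  by (simp add: lin_def)

lemma shiftop_ev: "inj f \<Longrightarrow> shiftop f (ev m) = ev (f m)"
  by (rule ext) (auto simp: shiftop_def ev_def the_inv_f_f f_the_inv_into_f)


abbreviation "XX \<equiv> shiftop mA"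
abbreviation "Ma \<equiv> shiftop ma"
abbreviation "Mb \<equiv> shiftop mb"
abbreviation "Mc \<equiv> shiftop mc"

definition lowdeg :: "nat \<Rightarrow> 'a::field vec \<Rightarrow> bool" where
  "lowdeg n v \<longleftrightarrow> (\<forall>m. v m \<noteq> 0 \<longrightarrow> deg m \<le> n)"

lemma lowdeg_ev: "deg m \<le> n \<Longrightarrow> lowdeg n (ev m)" by (simp add: lowdeg_def ev_def)
lemma lowdeg_mono: "lowdeg n v \<Longrightarrow> n \<le> n' \<Longrightarrow> lowdeg n' v" by (auto simp: lowdeg_def)
lemma lowdeg_add: "lowdeg n u \<Longrightarrow> lowdeg n w \<Longrightarrow> lowdeg n (u + w)" unfolding lowdeg_def by (auto; metis add.right_neutral)
lemma lowdeg_diff: "lowdeg n u \<Longrightarrow> lowdeg n w \<Longrightarrow> lowdeg n (u - w)" unfolding lowdeg_def by (auto; metis)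
lemma lowdeg_sv: "lowdeg n u \<Longrightarrow> lowdeg n (sv c u)" by (auto simp: lowdeg_def sv_def)
lemma lowdeg_zero: "lowdeg n 0" by (auto simp: lowdeg_def)
lemma lowdeg_sum: "(\<And>i. i \<in> S \<Longrightarrow> lowdeg n (f i)) \<Longrightarrow> lowdeg n (sum f S)"
  by (induction S rule: infinite_finite_induct) (auto simp: lowdeg_zero lowdeg_add)
lemma lowdeg_shift: assumes "inj f" "\<And>m. deg (f m) = deg m" "lowdeg n v" shows "lowdeg n (shiftop f v)"
  unfolding lowdeg_def
proof (intro allI impI)
  fix m assume a: "shiftop f v m \<noteq> 0"
  then obtain m0 where m0: "m = f m0" by (auto simp: shiftop_def split: if_splits)
  then have "v m0 \<noteq> 0" using a assms(1) by (simp add: shiftop_apply)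
  then show "deg m \<le> n" using assms(2,3) m0 by (auto simp: lowdeg_def)
qed
lemma deg_ma[simp]: "deg (ma m) = deg m" by (cases m) auto
lemma deg_mb[simp]: "deg (mb m) = deg m" by (cases m) auto
lemma deg_mc[simp]: "deg (mc m) = deg m" by (cases m) auto
lemma deg_mA[simp]: "deg (mA m) = Suc (deg m)" by (cases m) auto
lemma lowdeg_X: assumes "lowdeg n v" shows "lowdeg (Suc n) (XX v)"
  unfolding lowdeg_def
proof (intro allI impI)
  fix m assume a: "XX v m \<noteq> 0"
  then obtain m0 where m0: "m = mA m0" by (auto simp: shiftop_def split: if_splits)
  then have "v m0 \<noteq> 0" using a inj_mA by (simp add: shiftop_apply)
  then show "deg m \<le> Suc n" using assms m0 by (auto simp: lowdeg_def)
qed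
lemma lowdeg_Ma: "lowdeg n v \<Longrightarrow> lowdeg n (Ma v)" by (rule lowdeg_shift) (auto simp: inj_ma)
lemma lowdeg_Mb: "lowdeg n v \<Longrightarrow> lowdeg n (Mb v)" by (rule lowdeg_shift) (auto simp: inj_mb)
lemma lowdeg_Mc: "lowdeg n v \<Longrightarrow> lowdeg n (Mc v)" by (rule lowdeg_shift) (auto simp: inj_mc)

lemma lowdeg_ext: assumes "lowdeg n v" "\<And>m. v m \<noteq> 0 \<Longrightarrow> lowdeg n' (f m)" shows "lowdeg n' (ext f v)"
  unfolding lowdeg_def
proof (intro allI impI)
  fix m' assume "ext f v m' \<noteq> 0"
  then obtain m where "v m \<noteq> 0" "v m * f m m' \<noteq> 0"
    unfolding ext_def by (auto elim: sum.not_neutral_contains_not_neutral)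
  then show "deg m' \<le> n'" using assms(2)[of m] by (auto simp: lowdeg_def)
qed

lemma ext_cong: "(\<And>m. v m \<noteq> 0 \<Longrightarrow> f m = g m) \<Longrightarrow> ext f v = ext g v"
  by (auto simp: ext_def fun_eq_iff intro!: sum.cong)

lemma vfin_ext: assumes "vfin v" "\<And>m. v m \<noteq> 0 \<Longrightarrow> vfin (f m)" shows "vfin (ext f v)"
proof -
  have "ext f v = (\<Sum>m\<in>{m. v m \<noteq> 0}. sv (v m) (f m))"
    by (rule ext_sum) (use assms in \<open>auto simp: vfin_def\<close>)
  then show ?thesis by (simp only:) (intro vfin_sum vfin_sv, auto intro: assms)
qed

locale aw =
  fixes q :: "'a::field"
  assumes q0: "q \<noteq> 0" and q4: "q ^ 4 \<noteq> 1"
begin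

definition "k1 = q^2 - 1"
definition "k2 = q^3 - inverse q"
definition "k3 = 1 - inverse (q^2)"
definition "k4 = q - inverse (q^3)"

definition Ystep :: "(mon \<Rightarrow> 'a vec) \<Rightarrow> (mon \<Rightarrow> 'a vec) \<Rightarrow> mon \<Rightarrow> 'a vec" where
  "Ystep Yp Zp m = (case m of M 0 j k r s t \<Rightarrow> ev (M 0 (Suc j) k r s t)
     | M (Suc i) j k r s t \<Rightarrow> sv (q^2) (XX (Yp (M i j k r s t))) - sv k1 (ev (M i j k r s (Suc t)))
                              + sv k2 (Zp (M i j k r s t)))"

definition Zstep :: "(mon \<Rightarrow> 'a vec) \<Rightarrow> (mon \<Rightarrow> 'a vec) \<Rightarrow> mon \<Rightarrow> 'a vec" where
  "Zstep Yn Zp m = (case m of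
       M (Suc i) j k r s t \<Rightarrow> sv (inverse (q^2)) (XX (Zp (M i j k r s t))) + sv k3 (ev (M i j k r (Suc s) t))
                              - sv k4 (Yn (M i j k r s t))
     | M 0 (Suc j) k r s t \<Rightarrow> sv (q^2) (ext Yn (Zp (M 0 j k r s t))) - sv k1 (ev (M 0 j k (Suc r) s t))
                              + sv k2 (ev (M 1 j k r s t))
     | M 0 0 k r s t \<Rightarrow> ev (M 0 0 (Suc k) r s t))"

fun YZ :: "nat \<Rightarrow> (mon \<Rightarrow> 'a vec) \<times> (mon \<Rightarrow> 'a vec)" where
  "YZ 0 = (\<lambda>m. 0, \<lambda>m. 0)"
| "YZ (Suc n) = (let Yp = fst (YZ n); Zp = snd (YZ n);
                     Yn = (\<lambda>m. if deg m < n then Yp m else Ystep Yp Zp m)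
                 in (Yn, \<lambda>m. if deg m < n then Zp m else Zstep Yn Zp m))"

definition "Ym m = fst (YZ (Suc (deg m))) m"
definition "Zm m = snd (YZ (Suc (deg m))) m"

lemma YZ_stab: "deg m < N \<Longrightarrow> fst (YZ N) m = Ym m \<and> snd (YZ N) m = Zm m"
proof (induction N)
  case 0 then show ?case by simp
next
  case (Suc N)
  show ?case
  proof (cases "deg m < N")
    case True
    then show ?thesis using Suc by (simp add: Let_def)
  next
    case False
    then have "N = deg m" using Suc by simp
    then show ?thesis by (simp add: Ym_def Zm_def)
  qed
qed

lemma Ym_A0: "Ym (M 0 j k r s t) = ev (M 0 (Suc j) k r s t)"
  by (simp add: Ym_def Let_def Ystep_def)

lemma Ym_AS: "Ym (M (Suc i) j k r s t) = sv (q^2) (XX (Ym (M i j k r s t))) - sv k1 (ev (M i j k r s (Suc t)))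
                              + sv k2 (Zm (M i j k r s t))"
  using YZ_stab[of "M i j k r s t" "Suc (i + j + k)"]
  by (simp add: Ym_def Let_def Ystep_def)

lemma Zm_AS: "Zm (M (Suc i) j k r s t) = sv (inverse (q^2)) (XX (Zm (M i j k r s t))) + sv k3 (ev (M i j k r (Suc s) t))
                              - sv k4 (Ym (M i j k r s t))"
  using YZ_stab[of "M i j k r s t" "Suc (i + j + k)"]
  by (simp add: Zm_def Let_def Zstep_def Ystep_def)

lemma Zm_00: "Zm (M 0 0 k r s t) = ev (M 0 0 (Suc k) r s t)"
  by (simp add: Zm_def Let_def Zstep_def)

lemma Zm_0S_raw: "Zm (M 0 (Suc j) k r s t) = sv (q^2) (ext (fst (YZ (Suc (Suc (j + k))))) (Zm (M 0 j k r s t)))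
   - sv k1 (ev (M 0 j k (Suc r) s t)) + sv k2 (ev (M 1 j k r s t))"
  using YZ_stab[of "M 0 j k r s t" "Suc (j + k)"]
  by (simp add: Zm_def Let_def Zstep_def)

declare YZ.simps[simp del]

lemma bounds_step:
  assumes IH: "\<And>m. deg m < d \<Longrightarrow> vfin (Ym m) \<and> vfin (Zm m) \<and> lowdeg (Suc (deg m)) (Ym m) \<and> lowdeg (Suc (deg m)) (Zm m)"
  shows "\<And>m. deg m = d \<Longrightarrow> vfin (Ym m) \<and> lowdeg (Suc (deg m)) (Ym m)"
proof -
  fix m assume dm: "deg m = d"
  obtain i j k r s t where m: "m = M i j k r s t" by (cases m)
  show "vfin (Ym m) \<and> lowdeg (Suc (deg m)) (Ym m)"
  proof (cases i)
    case 0 then show ?thesis using m by (simp add: Ym_A0 lowdeg_ev)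
  next
    case (Suc i')
    let ?m' = "M i' j k r s t"
    have d': "deg ?m' < d" using dm m Suc by simp
    note ih = IH[OF d']
    show ?thesis using ih m Suc dm d'
      by (auto simp: Ym_AS inj_mA intro!: lowdeg_add lowdeg_diff lowdeg_sv lowdeg_X lowdeg_ev
          intro: lowdeg_mono)
  qed
qed

lemma bounds: "vfin (Ym m) \<and> vfin (Zm m) \<and> lowdeg (Suc (deg m)) (Ym m) \<and> lowdeg (Suc (deg m)) (Zm m)"
proof (induction "deg m" arbitrary: m rule: less_induct)
  case less
  define d where "d = deg m"
  have IH: "\<And>m'. deg m' < d \<Longrightarrow> vfin (Ym m') \<and> vfin (Zm m') \<and> lowdeg (Suc (deg m')) (Ym m') \<and> lowdeg (Suc (deg m')) (Zm m')"
    using less d_def by blast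
  have Yd: "\<And>m'. deg m' \<le> d \<Longrightarrow> vfin (Ym m') \<and> lowdeg (Suc (deg m')) (Ym m')"
  proof -
    fix m' :: mon assume "deg m' \<le> d"
    then consider "deg m' < d" | "deg m' = d" by linarith
    then show "vfin (Ym m') \<and> lowdeg (Suc (deg m')) (Ym m')"
    proof cases
      case 1 then show ?thesis using IH by blast
    next
      case 2 then show ?thesis using bounds_step[OF IH] by blast
    qed
  qed
  obtain i j k r s t where m: "m = M i j k r s t" by (cases m)
  have Z: "vfin (Zm m) \<and> lowdeg (Suc (deg m)) (Zm m)"
  proof (cases i)
    case (Suc i')
    let ?m' = "M i' j k r s t"
    have d': "deg ?m' < d" using d_def m Suc by simp
    note ih = IH[OF d']
    show ?thesis using ih m Suc d_def d'
      by (auto simp: Zm_AS inj_mA intro!: lowdeg_add lowdeg_diff lowdeg_sv lowdeg_X lowdeg_ev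
          intro: lowdeg_mono)
  next
    case 0
    show ?thesis
    proof (cases j)
      case 0 then show ?thesis using m \<open>i = 0\<close> by (simp add: Zm_00 lowdeg_ev)
    next
      case (Suc j')
      let ?m' = "M 0 j' k r s t"
      have d': "deg ?m' < d" using d_def m Suc \<open>i = 0\<close> by simp
      note ih = IH[OF d']
      have dd: "d = Suc (j' + k)" using d_def m Suc \<open>i = 0\<close> by simp
      have e: "ext (fst (YZ (Suc (Suc (j' + k))))) (Zm ?m') = ext Ym (Zm ?m')"
      proof (rule ext_cong)
        fix m1 assume "Zm ?m' m1 \<noteq> 0"
        then have "deg m1 \<le> Suc (j' + k)" using ih by (auto simp: lowdeg_def)
        then show "fst (YZ (Suc (Suc (j' + k)))) m1 = Ym m1" using YZ_stab[of m1 "Suc (Suc (j' + k))"] by (simp del: YZ.simps)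
      qed
      have le: "\<And>m1. Zm ?m' m1 \<noteq> 0 \<Longrightarrow> deg m1 \<le> d" using ih dd by (auto simp: lowdeg_def)
      have v1: "vfin (ext Ym (Zm ?m'))"
        by (rule vfin_ext) (use ih Yd le in auto)
      have l1: "lowdeg (Suc d) (ext Ym (Zm ?m'))"
        by (rule lowdeg_ext[of d]) (use ih dd Yd le in \<open>auto intro: lowdeg_mono\<close>)
      show ?thesis using m Suc \<open>i = 0\<close> v1 l1 dd
        by (auto simp: Zm_0S_raw e intro!: lowdeg_add lowdeg_diff lowdeg_sv lowdeg_ev)
    qed
  qed
  show ?case using Z Yd[of m] d_def by auto
qed

lemma vfin_Ym[simp]: "vfin (Ym m)" using bounds by blast
lemma vfin_Zm[simp]: "vfin (Zm m)" using bounds by blast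
lemma lowdeg_Ym: "lowdeg (Suc (deg m)) (Ym m)" using bounds by blast
lemma lowdeg_Zm: "lowdeg (Suc (deg m)) (Zm m)" using bounds by blast

lemma Zm_0S: "Zm (M 0 (Suc j) k r s t) = sv (q^2) (ext Ym (Zm (M 0 j k r s t)))
   - sv k1 (ev (M 0 j k (Suc r) s t)) + sv k2 (ev (M 1 j k r s t))"
proof -
  have "ext (fst (YZ (Suc (Suc (j + k))))) (Zm (M 0 j k r s t)) = ext Ym (Zm (M 0 j k r s t))"
  proof (rule ext_cong)
    fix m1 assume "Zm (M 0 j k r s t) m1 \<noteq> 0"
    then have "deg m1 \<le> Suc (j + k)" using lowdeg_Zm[of "M 0 j k r s t"] by (auto simp: lowdeg_def)
    then show "fst (YZ (Suc (Suc (j + k)))) m1 = Ym m1" using YZ_stab[of m1 "Suc (Suc (j + k))"] by (simp del: YZ.simps)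
  qed
  then show ?thesis by (simp add: Zm_0S_raw)
qed

end


fun cshift :: "nat \<Rightarrow> nat \<Rightarrow> nat \<Rightarrow> mon \<Rightarrow> mon" where
  "cshift a b c (M i j k r s t) = M i j k (r + a) (s + b) (t + c)"

lemma ma_cs: "ma = cshift 1 0 0" by (rule ext, case_tac x) auto
lemma mb_cs: "mb = cshift 0 1 0" by (rule ext, case_tac x) auto
lemma mc_cs: "mc = cshift 0 0 1" by (rule ext, case_tac x) auto
lemma inj_cs: "inj (cshift a b c)" by (rule injI) (case_tac x; case_tac y; simp)
lemma deg_cs[simp]: "deg (cshift a b c m) = deg m" by (cases m) auto

lemma sv_add: "sv c (u + w) = sv c u + sv c w" by (rule ext) (simp add: sv_def distrib_left)
lemma sv_diff: "sv c (u - w) = sv c u - sv c w" by (rule ext) (simp add: sv_def right_diff_distrib)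
lemma sv_sv: "sv c (sv d u) = sv (c * d) u" by (rule ext) (simp add: sv_def)

lemma lin_plus: "lin L1 \<Longrightarrow> lin L2 \<Longrightarrow> lin (\<lambda>v. L1 v + L2 v)"
  by (simp add: lin_def fun_eq_iff sv_def distrib_left)
lemma lin_minus: "lin L1 \<Longrightarrow> lin L2 \<Longrightarrow> lin (\<lambda>v. L1 v - L2 v)"
  by (simp add: lin_def fun_eq_iff sv_def right_diff_distrib)
lemma lin_scal: "lin L \<Longrightarrow> lin (\<lambda>v. sv c (L v))"
  unfolding lin_def by (simp add: sv_add sv_sv mult.commute)
lemma lin_o: "lin L1 \<Longrightarrow> lin L2 \<Longrightarrow> lin (\<lambda>v. L1 (L2 v))"
  by (simp add: lin_def)
lemma lin_id: "lin (\<lambda>v. v)" by (simp add: lin_def)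

lemma lin_XX[simp]: "lin XX" by (simp add: lin_shiftop inj_mA)
lemma lin_cs[simp]: "lin (shiftop (cshift a b c))" by (simp add: lin_shiftop inj_cs)


lemma shift_ext: assumes "inj f" "vfin v" "\<And>m. vfin (g m)"
  shows "shiftop f (ext g v) = ext (\<lambda>m. shiftop f (g m)) v"
proof -
  have l: "lin (\<lambda>v. shiftop f (ext g v))" by (rule lin_o) (auto intro: lin_shiftop lin_ext assms)
  have l2: "lin (ext (\<lambda>m. shiftop f (g m)))" by (rule lin_ext) (simp add: assms)
  show ?thesis by (rule lin_eqI[OF l l2]) (auto simp: assms)
qed

lemma ext_shift: assumes "inj f" "vfin v" "\<And>m. vfin (g m)"
  shows "ext g (shiftop f v) = ext (\<lambda>m. g (f m)) v"
proof -
  have l: "lin (\<lambda>v. ext g (shiftop f v))" by (rule lin_o) (auto intro: lin_shiftop lin_ext assms)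
  have l2: "lin (ext (\<lambda>m. g (f m)))" by (rule lin_ext) (simp add: assms)
  show ?thesis by (rule lin_eqI[OF l l2]) (auto simp: assms shiftop_ev)
qed

lemma shift_add: "shiftop f (u + w) = shiftop f u + shiftop f w"
  by (rule ext) (simp add: shiftop_def)
lemma shift_diff: "shiftop f (u - w) = shiftop f u - shiftop f w"
  by (rule ext) (simp add: shiftop_def)
lemma shift_sv: "shiftop f (sv c u) = sv c (shiftop f u)"
  by (rule ext) (simp add: shiftop_def sv_def)

lemma cs_mA: "cshift a b c (mA m) = mA (cshift a b c m)" by (cases m) auto

lemma shift_comm: assumes "inj f" "inj g" "\<And>m. f (g m) = g (f m)"
  shows "shiftop f (shiftop g v) = shiftop g (shiftop f v)"
proof (rule ext)
  fix m
  show "shiftop f (shiftop g v) m = shiftop g (shiftop f v) m"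
  proof (cases "\<exists>m0. m = f (g m0)")
    case True
    then obtain m0 where m0: "m = f (g m0)" by blast
    have "shiftop f (shiftop g v) (f (g m0)) = v m0" by (simp add: shiftop_apply assms(1,2))
    moreover have "shiftop g (shiftop f v) (g (f m0)) = v m0" by (simp add: shiftop_apply assms(1,2))
    ultimately show ?thesis using m0 assms(3) by metis
  next
    case False
    then have a: "\<forall>x. m \<noteq> f (g x)" by blast
    have "shiftop f (shiftop g v) m = 0"
    proof (cases "m \<in> range f")
      case True
      then obtain m1 where m1: "m = f m1" by auto
      then have "m1 \<notin> range g" using a by auto
      then show ?thesis using m1 by (simp add: shiftop_apply assms(1) shiftop_apply0)
    qed (simp add: shiftop_apply0)
    moreover have "shiftop g (shiftop f v) m = 0"
    proof (cases "m \<in> range g")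
      case True
      then obtain m1 where m1: "m = g m1" by auto
      then have "m1 \<notin> range f" using a assms(3) by auto
      then show ?thesis using m1 by (simp add: shiftop_apply assms(2) shiftop_apply0)
    qed (simp add: shiftop_apply0)
    ultimately show ?thesis by simp
  qed
qed

lemma XX_cs: "XX (shiftop (cshift a b c) v) = shiftop (cshift a b c) (XX v)"
  by (rule shift_comm[symmetric]) (auto simp: inj_mA inj_cs cs_mA)

context aw begin

lemma Ym_cs_step:
  assumes IH: "\<And>m. deg m < d \<Longrightarrow> Ym (cshift a b c m) = shiftop (cshift a b c) (Ym m) \<and> Zm (cshift a b c m) = shiftop (cshift a b c) (Zm m)"
  shows "\<And>m. deg m = d \<Longrightarrow> Ym (cshift a b c m) = shiftop (cshift a b c) (Ym m)"
proof -
  fix m assume dm: "deg m = d"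
  obtain i j k r s t where m: "m = M i j k r s t" by (cases m)
  show "Ym (cshift a b c m) = shiftop (cshift a b c) (Ym m)"
  proof (cases i)
    case 0 then show ?thesis using m by (simp add: Ym_A0 shiftop_ev inj_cs)
  next
    case (Suc i')
    have d': "deg (M i' j k r s t) < d" using dm m Suc by simp
    note ih = IH[OF d']
    show ?thesis using ih m Suc
      by (simp add: Ym_AS shift_add shift_diff shift_sv XX_cs shiftop_ev inj_cs)
  qed
qed

lemma Ym_cs: "Ym (cshift a b c m) = shiftop (cshift a b c) (Ym m) \<and> Zm (cshift a b c m) = shiftop (cshift a b c) (Zm m)"
proof (induction "deg m" arbitrary: m rule: less_induct)
  case less
  define d where "d = deg m"
  have IH: "\<And>m'. deg m' < d \<Longrightarrow> Ym (cshift a b c m') = shiftop (cshift a b c) (Ym m') \<and> Zm (cshift a b c m') = shiftop (cshift a b c) (Zm m')"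
    using less d_def by blast
  have Yd: "\<And>m'. deg m' \<le> d \<Longrightarrow> Ym (cshift a b c m') = shiftop (cshift a b c) (Ym m')"
    using IH Ym_cs_step[OF IH] by (metis le_neq_implies_less)
  obtain i j k r s t where m: "m = M i j k r s t" by (cases m)
  have Z: "Zm (cshift a b c m) = shiftop (cshift a b c) (Zm m)"
  proof (cases i)
    case (Suc i')
    have d': "deg (M i' j k r s t) < d" using d_def m Suc by simp
    note ih = IH[OF d']
    show ?thesis using ih m Suc
      by (simp add: Zm_AS shift_add shift_diff shift_sv XX_cs shiftop_ev inj_cs)
  next
    case 0
    show ?thesis
    proof (cases j)
      case 0 then show ?thesis using m \<open>i = 0\<close> by (simp add: Zm_00 shiftop_ev inj_cs)
    next
      case (Suc j')
      let ?m' = "M 0 j' k r s t"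
      have d': "deg ?m' < d" using d_def m Suc \<open>i = 0\<close> by simp
      note ih = IH[OF d']
      have le: "\<And>m1. Zm ?m' m1 \<noteq> 0 \<Longrightarrow> deg m1 \<le> d"
        using lowdeg_Zm[of ?m'] d_def m Suc \<open>i = 0\<close> by (auto simp: lowdeg_def)
      have "ext Ym (Zm (cshift a b c ?m')) = ext (\<lambda>m1. Ym (cshift a b c m1)) (Zm ?m')"
        using ih by (simp add: ext_shift inj_cs)
      also have "\<dots> = ext (\<lambda>m1. shiftop (cshift a b c) (Ym m1)) (Zm ?m')"
        by (rule ext_cong) (use Yd le in auto)
      also have "\<dots> = shiftop (cshift a b c) (ext Ym (Zm ?m'))"
        by (simp add: shift_ext inj_cs)
      finally have e: "ext Ym (Zm (cshift a b c ?m')) = shiftop (cshift a b c) (ext Ym (Zm ?m'))" .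
      show ?thesis using m Suc \<open>i = 0\<close> e
        by (simp add: Zm_0S shift_add shift_diff shift_sv shiftop_ev inj_cs)
    qed
  qed
  show ?case using Z Yd[of m] d_def by auto
qed

definition "Yop = ext Ym"
definition "Zop = ext Zm"

lemma lin_Y[simp]: "lin Yop" by (simp add: Yop_def lin_ext)
lemma lin_Z[simp]: "lin Zop" by (simp add: Zop_def lin_ext)
lemma vfin_Y[simp]: "vfin v \<Longrightarrow> vfin (Yop v)" using lin_Y lin_vfin by blast
lemma vfin_Z[simp]: "vfin v \<Longrightarrow> vfin (Zop v)" using lin_Z lin_vfin by blast
lemma vfin_XX[simp]: "vfin v \<Longrightarrow> vfin (XX v)" by (simp add: inj_mA)
lemma vfin_cs[simp]: "vfin v \<Longrightarrow> vfin (shiftop (cshift a b c) v)" by (simp add: inj_cs)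

lemma Y_cs: "vfin v \<Longrightarrow> Yop (shiftop (cshift a b c) v) = shiftop (cshift a b c) (Yop v)"
  by (rule lin_eqI[OF lin_o[OF lin_Y lin_cs] lin_o[OF lin_cs lin_Y]])
     (auto simp: Yop_def shiftop_ev inj_cs Ym_cs)
lemma Z_cs: "vfin v \<Longrightarrow> Zop (shiftop (cshift a b c) v) = shiftop (cshift a b c) (Zop v)"
  by (rule lin_eqI[OF lin_o[OF lin_Z lin_cs] lin_o[OF lin_cs lin_Z]])
     (auto simp: Zop_def shiftop_ev inj_cs Ym_cs)

lemma ev_mA: "ev (mA m) = XX (ev m)" by (simp add: shiftop_ev inj_mA)

lemma rel2: "vfin v \<Longrightarrow> Yop (XX v) = sv (q^2) (XX (Yop v)) - sv k1 (shiftop (cshift 0 0 1) v) + sv k2 (Zop v)"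
proof (rule lin_eqI[OF lin_o[OF lin_Y lin_XX] lin_plus[OF lin_minus[OF lin_scal[OF lin_o[OF lin_XX lin_Y]] lin_scal[OF lin_cs]] lin_scal[OF lin_Z]]])
  fix m show "Yop (XX (ev m)) = sv (q^2) (XX (Yop (ev m))) - sv k1 (shiftop (cshift 0 0 1) (ev m)) + sv k2 (Zop (ev m))"
    by (cases m) (simp add: Yop_def Zop_def shiftop_ev inj_mA inj_cs Ym_AS fun_eq_iff)
qed

lemma rel3: "vfin v \<Longrightarrow> Zop (XX v) = sv (inverse (q^2)) (XX (Zop v)) + sv k3 (shiftop (cshift 0 1 0) v) - sv k4 (Yop v)"
proof (rule lin_eqI[OF lin_o[OF lin_Z lin_XX] lin_minus[OF lin_plus[OF lin_scal[OF lin_o[OF lin_XX lin_Z]] lin_scal[OF lin_cs]] lin_scal[OF lin_Y]]])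
  fix m show "Zop (XX (ev m)) = sv (inverse (q^2)) (XX (Zop (ev m))) + sv k3 (shiftop (cshift 0 1 0) (ev m)) - sv k4 (Yop (ev m))"
    by (cases m) (simp add: Yop_def Zop_def shiftop_ev inj_mA inj_cs Zm_AS fun_eq_iff)
qed

end


context aw begin

abbreviation "Ma' \<equiv> shiftop (cshift 1 0 0)"
abbreviation "Mb' \<equiv> shiftop (cshift 0 1 0)"
abbreviation "Mc' \<equiv> shiftop (cshift 0 0 1)"

lemma qinv: "q^2 * (inverse (q^2) * x) = x" using q0 by (simp add: mult.assoc[symmetric])

lemma rel1_step: assumes w: "vfin w"
  and IH: "Zop (Yop w) = sv (q^2) (Yop (Zop w)) - sv k1 (Ma' w) + sv k2 (XX w)"
  shows "Zop (Yop (XX w)) = sv (q^2) (Yop (Zop (XX w))) - sv k1 (Ma' (XX w)) + sv k2 (XX (XX w))"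
proof -
  have e1: "Zop (Yop (XX w)) = sv (q^2) (Zop (XX (Yop w))) - sv k1 (Zop (Mc' w)) + sv k2 (Zop (Zop w))"
    using w by (simp add: rel2 lin_add[OF lin_Z] lin_diff[OF lin_Z] lin_sv[OF lin_Z])
  have e2: "Zop (XX (Yop w)) = sv (inverse (q^2)) (XX (Zop (Yop w))) + sv k3 (Mb' (Yop w)) - sv k4 (Yop (Yop w))"
    using w by (simp add: rel3)
  have e3: "Zop (Mc' w) = Mc' (Zop w)" using w by (simp add: Z_cs)
  have e4: "Yop (Zop (XX w)) = sv (inverse (q^2)) (Yop (XX (Zop w))) + sv k3 (Yop (Mb' w)) - sv k4 (Yop (Yop w))"
    using w by (simp add: rel3 lin_add[OF lin_Y] lin_diff[OF lin_Y] lin_sv[OF lin_Y])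
  have e5: "Yop (XX (Zop w)) = sv (q^2) (XX (Yop (Zop w))) - sv k1 (Mc' (Zop w)) + sv k2 (Zop (Zop w))"
    using w by (simp add: rel2)
  have e6: "Yop (Mb' w) = Mb' (Yop w)" using w by (simp add: Y_cs)
  have e7: "Ma' (XX w) = XX (Ma' w)" by (simp add: XX_cs)
  have e8: "XX (Zop (Yop w)) = sv (q^2) (XX (Yop (Zop w))) - sv k1 (XX (Ma' w)) + sv k2 (XX (XX w))"
    using w by (simp add: IH lin_add[OF lin_XX] lin_diff[OF lin_XX] lin_sv[OF lin_XX])
  show ?thesis
    unfolding e1 e2 e3 e4 e5 e6 e7
  proof (rule ext)
    fix x
    have e8x: "XX (Zop (Yop w)) x = q^2 * XX (Yop (Zop w)) x - k1 * XX (Ma' w) x + k2 * XX (XX w) x"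
      using fun_cong[OF e8, of x] by (simp add: sv_apply)
    show "(sv (q\<^sup>2) (sv (inverse (q\<^sup>2)) (XX (Zop (Yop w))) + sv k3 (Mb' (Yop w)) - sv k4 (Yop (Yop w))) -
          sv k1 (Mc' (Zop w)) + sv k2 (Zop (Zop w))) x =
         (sv (q\<^sup>2) (sv (inverse (q\<^sup>2)) (sv (q\<^sup>2) (XX (Yop (Zop w))) - sv k1 (Mc' (Zop w)) + sv k2 (Zop (Zop w))) +
            sv k3 (Mb' (Yop w)) - sv k4 (Yop (Yop w))) -
          sv k1 (XX (Ma' w)) + sv k2 (XX (XX w))) x"
      by (simp add: sv_apply e8x algebra_simps qinv)
  qed
qed

lemma rel1_ev: "Zop (Yop (ev (M i j k r s t))) = sv (q^2) (Yop (Zop (ev (M i j k r s t)))) - sv k1 (Ma' (ev (M i j k r s t))) + sv k2 (XX (ev (M i j k r s t)))"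
proof (induction i arbitrary: j k r s t)
  case 0
  show ?case by (simp add: Yop_def Zop_def Ym_A0 Zm_0S shiftop_ev inj_mA inj_cs fun_eq_iff)
next
  case (Suc i)
  have eq: "ev (M (Suc i) j k r s t) = XX (ev (M i j k r s t))" by (simp add: shiftop_ev inj_mA)
  show ?case unfolding eq by (rule rel1_step[OF vfin_ev Suc.IH])
qed

lemma rel1: "vfin v \<Longrightarrow> Zop (Yop v) = sv (q^2) (Yop (Zop v)) - sv k1 (Ma' v) + sv k2 (XX v)"
proof (rule lin_eqI[OF lin_o[OF lin_Z lin_Y] lin_plus[OF lin_minus[OF lin_scal[OF lin_o[OF lin_Y lin_Z]] lin_scal[OF lin_cs]] lin_scal[OF lin_XX]]])
  fix m show "Zop (Yop (ev m)) = sv (q^2) (Yop (Zop (ev m))) - sv k1 (Ma' (ev m)) + sv k2 (XX (ev m))"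
    by (cases m) (simp only: rel1_ev)
qed

end


context aw begin

fun opg :: "gen \<Rightarrow> 'a vec \<Rightarrow> 'a vec" where
  "opg GA = XX" | "opg GB = Yop" | "opg GC = Zop"

fun rw :: "gen list \<Rightarrow> 'a vec \<Rightarrow> 'a vec" where
  "rw [] v = v" | "rw (g # w) v = opg g (rw w v)"

lemma lin_opg[simp]: "lin (opg g)" by (cases g) auto
lemma lin_rw[simp]: "lin (rw w)"
  by (induction w) (auto simp: lin_id intro: lin_o[OF lin_opg, simplified])

lemma rw_append: "rw (u @ w) v = rw u (rw w v)" by (induction u) auto

definition rho :: "'a ncpoly \<Rightarrow> 'a vec \<Rightarrow> 'a vec" where
  "rho p v = (\<Sum>w\<in>{w. p w \<noteq> 0}. sv (p w) (rw w v))"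

lemma rho_sum_superset: assumes "fin p" "{w. p w \<noteq> 0} \<subseteq> S" "finite S"
  shows "rho p v = (\<Sum>w\<in>S. sv (p w) (rw w v))"
  unfolding rho_def by (rule sum.mono_neutral_left) (use assms in \<open>auto simp: sv_zero\<close>)

lemma vfin_rho[simp]: "vfin v \<Longrightarrow> vfin (rho p v)"
  unfolding rho_def by (intro vfin_sum vfin_sv lin_vfin[OF lin_rw])

lemma rho_add: assumes "fin p" "fin p'" shows "rho (p + p') v = rho p v + rho p' v"
proof -
  let ?S = "{w. p w \<noteq> 0} \<union> {w. p' w \<noteq> 0}"
  have f: "finite ?S" using assms by (simp add: fin_def)
  show ?thesis
    apply (subst (1 2 3) rho_sum_superset[where S="?S"])
    using assms f by (auto simp: sum.distrib[symmetric] sv_def fun_eq_iff distrib_right sum_fun_apply)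
qed

lemma rho_smult: assumes "fin p" shows "rho (c \<cdot> p) v = sv c (rho p v)"
proof -
  let ?S = "{w. p w \<noteq> 0}"
  have f: "finite ?S" using assms by (simp add: fin_def)
  show ?thesis
    apply (subst (1 2) rho_sum_superset[where S="?S"])
    using assms f by (auto simp: smult_apply sv_def fun_eq_iff sum_fun_apply sum_distrib_left mult.assoc)
qed

lemma rho_zero: "rho 0 v = 0" by (simp add: rho_def)

lemma rho_diff: assumes "fin p" "fin p'" shows "rho (p - p') v = rho p v - rho p' v"
proof -
  have "rho p v = rho ((p - p') + p') v" by simp
  also have "\<dots> = rho (p - p') v + rho p' v" using rho_add[OF fin_diff[OF assms] assms(2)] .
  finally show ?thesis by simp
qed

lemma rho_sum: "(\<And>i. i \<in> S \<Longrightarrow> fin (f i)) \<Longrightarrow> rho (sum f S) v = (\<Sum>i\<in>S. rho (f i) v)"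
  by (induction S rule: infinite_finite_induct) (auto simp: rho_zero rho_add)

lemma rho_word: "rho (word w) v = rw w v"
  by (simp add: rho_def word_def sv_def)

lemma rho_word_mult: assumes "fin p" "vfin v" shows "rho (word u \<otimes> p) v = rw u (rho p v)"
proof -
  let ?S = "{w. p w \<noteq> 0}"
  have "word u \<otimes> p = (\<Sum>w\<in>?S. p w \<cdot> word (u @ w))"
    by (subst decomp[OF assms(1)]) (simp add: mult_sum_right mult_smult_right word_mult_word)
  then have "rho (word u \<otimes> p) v = (\<Sum>w\<in>?S. sv (p w) (rw u (rw w v)))"
    by (simp add: rho_sum rho_smult rho_word rw_append)
  also have "\<dots> = rw u (rho p v)"
    unfolding rho_def using assms by (simp add: lin_sum[OF lin_rw] lin_sv[OF lin_rw] lin_vfin[OF lin_rw])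
  finally show ?thesis .
qed

lemma rho_mult: assumes "fin p" "fin p'" "vfin v" shows "rho (p \<otimes> p') v = rho p (rho p' v)"
proof -
  let ?S = "{w. p w \<noteq> 0}"
  have "p \<otimes> p' = (\<Sum>w\<in>?S. p w \<cdot> (word w \<otimes> p'))"
    by (subst decomp[OF assms(1)]) (simp add: mult_sum_left mult_smult_left)
  then have "rho (p \<otimes> p') v = (\<Sum>w\<in>?S. sv (p w) (rw w (rho p' v)))"
    using assms by (simp add: rho_sum rho_smult rho_word_mult)
  also have "\<dots> = rho p (rho p' v)" by (simp add: rho_def)
  finally show ?thesis .
qed

lemma rho_var: "rho (nc_var g) v = opg g v" by (simp add: nc_var_word rho_word)
lemma rho_one: "rho nc_one v = v" by (simp add: nc_one_word rho_word)

lemma q2: "q^2 \<noteq> 0" using q0 by simp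
lemma q4': "q^4 - 1 \<noteq> 0" using q4 by simp
lemma qp1: "q^2 + 1 \<noteq> 0"
proof
  assume "q^2 + 1 = 0"
  then have "q^2 = -1" by (metis add_diff_cancel_right' diff_0)
  then have "q^4 = 1" by (metis (no_types) power2_minus power_mult mult_2_right one_power2 numeral_Bit0 power_add power2_eq_square)
  with q4 show False by simp
qed
lemma qm1: "q^2 - 1 \<noteq> 0"
proof
  assume "q^2 - 1 = 0"
  then have "q^2 = 1" by simp
  then have "q^4 = 1" by (metis power_mult num_double one_power2 numeral_times_numeral power2_eq_square mult_2_right)
  with q4 show False by simp
qed

lemma rho_alpha: assumes "vfin v" shows "rho (aw_alpha q) v = Ma' v"
proof -
  have "rho (aw_alpha q) v = sv (q + inverse q) (XX v + sv (inverse (q^2 - inverse (q^2)))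
      (sv q (Yop (Zop v)) - sv (inverse q) (Zop (Yop v))))"
    using assms by (simp add: aw_alpha_def rho_smult rho_add rho_diff rho_mult rho_var)
  also have "\<dots> = Ma' v"
  proof (rule ext)
    fix x
    have r: "Zop (Yop v) x = q^2 * Yop (Zop v) x - k1 * Ma' v x + k2 * XX v x"
      using fun_cong[OF rel1[OF assms], of x] by (simp add: sv_apply)
    show "sv (q + inverse q) (XX v + sv (inverse (q^2 - inverse (q^2)))
      (sv q (Yop (Zop v)) - sv (inverse q) (Zop (Yop v)))) x = Ma' v x"
      using q0 q4' qp1 qm1 by (simp add: sv_apply r k1_def k2_def field_simps) (simp add: eval_nat_numeral algebra_simps)
  qed
  finally show ?thesis .
qed

lemma s1: "(q + inverse q) * (inverse (q^2 - inverse (q^2)) * (q * k3)) = 1"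
  using q0 q4' qp1 qm1 by (simp add: k3_def field_simps) (simp add: eval_nat_numeral algebra_simps)
lemma s2: "inverse (q^2 - inverse (q^2)) * (q * k4) = 1"
  using q0 q4' qp1 qm1 by (simp add: k4_def field_simps) (simp add: eval_nat_numeral algebra_simps)
lemma s3: "q * inverse (q^2) = inverse q"
  using q0 by (simp add: field_simps eval_nat_numeral)

lemma lincomb: assumes "p*(K*(Q*c3)) = 1" "K*(Q*c4) = 1" "Q*qi2 = qi"
  shows "p*(y + K*(Q*(qi2*xz + c3*bb - c4*y) - qi*xz)) = (bb::'b::field)"
proof -
  have "p*(y + K*(Q*(qi2*xz + c3*bb - c4*y) - qi*xz)) = p*y - p*(K*(Q*c4))*y + p*(K*(Q*c3))*bb + p*K*(Q*qi2 - qi)*xz"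
    by (simp add: algebra_simps)
  then show ?thesis using assms by simp
qed

lemma rho_beta: assumes "vfin v" shows "rho (aw_beta q) v = Mb' v"
proof -
  have "rho (aw_beta q) v = sv (q + inverse q) (Yop v + sv (inverse (q^2 - inverse (q^2)))
      (sv q (Zop (XX v)) - sv (inverse q) (XX (Zop v))))"
    using assms by (simp add: aw_beta_def rho_smult rho_add rho_diff rho_mult rho_var)
  also have "\<dots> = Mb' v"
  proof (rule ext)
    fix x
    have r: "Zop (XX v) x = inverse (q^2) * XX (Zop v) x + k3 * Mb' v x - k4 * Yop v x"
      using fun_cong[OF rel3[OF assms], of x] by (simp add: sv_apply)
    show "sv (q + inverse q) (Yop v + sv (inverse (q^2 - inverse (q^2)))
      (sv q (Zop (XX v)) - sv (inverse q) (XX (Zop v)))) x = Mb' v x"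
      unfolding sv_apply plus_fun_apply diff_fun_apply r by (rule lincomb[OF s1 s2 s3])
  qed
  finally show ?thesis .
qed

lemma rho_gamma: assumes "vfin v" shows "rho (aw_gamma q) v = Mc' v"
proof -
  have "rho (aw_gamma q) v = sv (q + inverse q) (Zop v + sv (inverse (q^2 - inverse (q^2)))
      (sv q (XX (Yop v)) - sv (inverse q) (Yop (XX v))))"
    using assms by (simp add: aw_gamma_def rho_smult rho_add rho_diff rho_mult rho_var)
  also have "\<dots> = Mc' v"
  proof (rule ext)
    fix x
    have r: "Yop (XX v) x = q^2 * XX (Yop v) x - k1 * Mc' v x + k2 * Zop v x"
      using fun_cong[OF rel2[OF assms], of x] by (simp add: sv_apply)
    show "sv (q + inverse q) (Zop v + sv (inverse (q^2 - inverse (q^2)))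
      (sv q (XX (Yop v)) - sv (inverse q) (Yop (XX v)))) x = Mc' v x"
      using q0 q4' qp1 qm1 by (simp add: sv_apply r k1_def k2_def field_simps) (simp add: eval_nat_numeral algebra_simps)
  qed
  finally show ?thesis .
qed

lemma cs_comm_opg: "vfin v \<Longrightarrow> opg g (shiftop (cshift a b c) v) = shiftop (cshift a b c) (opg g v)"
  by (cases g) (auto simp: XX_cs Y_cs Z_cs)

lemma lam0: "(\<lambda>a. 0) = (0::'a vec)" by (rule ext) simp

lemma soundness: "x \<in> aw_ideal q \<Longrightarrow> vfin v \<Longrightarrow> rho x v = 0"
proof (induction arbitrary: v rule: aw_ideal.induct)
  case (rel X g)
  then have fX: "fin X" and fg: "fin g" by auto
  obtain h where g: "g = nc_var h" using rel(2) by (metis empty_iff insert_iff)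
  have "\<exists>a b c. \<forall>v. vfin v \<longrightarrow> rho X v = shiftop (cshift a b c) v"
    using rel(1) rho_alpha rho_beta rho_gamma by blast
  then obtain a b c where X: "\<And>v. vfin v \<Longrightarrow> rho X v = shiftop (cshift a b c) v" by blast
  have "rho (X \<otimes> g \<ominus> g \<otimes> X) v = rho (X \<otimes> g) v - rho (g \<otimes> X) v"
    unfolding nc_diff_eq by (rule rho_diff) (use fX fg in simp_all)
  also have "\<dots> = rho X (opg h v) - opg h (rho X v)"
    using fX fg rel.prems by (simp only: rho_mult rho_var g fin_var)
  also have "\<dots> = 0"
    using rel.prems by (simp only: X cs_comm_opg lin_vfin[OF lin_opg] diff_self)
  finally show ?case .
next
  case zero then show ?case by (simp only: nc_zero_eq rho_zero)
next
  case (add x y)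
  have "rho (x \<oplus> y) v = rho x v + rho y v" unfolding nc_add_eq
    by (rule rho_add) (use ideal_fin add.hyps in auto)
  also have "\<dots> = 0" using add.IH add.prems by (simp add: lam0)
  finally show ?case .
next
  case (lmult p x)
  have "rho (p \<otimes> x) v = rho p (rho x v)" using lmult by (simp add: rho_mult ideal_fin)
  also have "\<dots> = rho p 0" using lmult by (simp add: lam0)
  also have "\<dots> = 0" by (simp add: rho_def lin_zero[OF lin_rw] sv_def lam0)
  finally show ?case .
next
  case (rmult p x)
  have "rho (x \<otimes> p) v = rho x (rho p v)" using rmult by (simp add: rho_mult ideal_fin)
  also have "\<dots> = 0" using rmult by (simp add: lam0)
  finally show ?case .
qed

end


context aw begin

lemma var_var: "nc_var g \<otimes> nc_var h = word [g, h]" by (simp add: nc_var_word word_mult_word)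

lemma E1: "nc_var GB \<otimes> nc_var GA = q^2 \<cdot> (nc_var GA \<otimes> nc_var GB) - k1 \<cdot> aw_gamma q + k2 \<cdot> nc_var GC"
proof (rule ext)
  fix w
  show "(nc_var GB \<otimes> nc_var GA) w = (q^2 \<cdot> (nc_var GA \<otimes> nc_var GB) - k1 \<cdot> aw_gamma q + k2 \<cdot> nc_var GC) w"
    using q0 q4' qp1 qm1
    by (auto simp: nc_var_word word_mult_word aw_gamma_def smult_apply word_def k1_def k2_def field_simps)
       (auto simp: eval_nat_numeral algebra_simps)
qed

lemma t1: "k3 * ((q + inverse q) * (inverse (q^2 - inverse (q^2)) * q)) = 1"
  using s1 by (simp add: algebra_simps)
lemma t2: "k3 * (q + inverse q) = k4"
  using q0 by (simp add: k3_def k4_def field_simps eval_nat_numeral)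
lemma t3: "inverse (q^2) = k3 * ((q + inverse q) * (inverse (q^2 - inverse (q^2)) * inverse q))"
proof -
  have "k3 * ((q + inverse q) * (inverse (q^2 - inverse (q^2)) * inverse q)) =
        (k3 * ((q + inverse q) * (inverse (q^2 - inverse (q^2)) * q))) * inverse (q^2)"
    unfolding s3[symmetric] by (simp add: ac_simps)
  also have "\<dots> = inverse (q^2)" using t1 by simp
  finally show ?thesis by simp
qed

lemma E2: "nc_var GC \<otimes> nc_var GA = inverse (q^2) \<cdot> (nc_var GA \<otimes> nc_var GC) + k3 \<cdot> aw_beta q - k4 \<cdot> nc_var GB"
proof (rule ext)
  fix w
  show "(nc_var GC \<otimes> nc_var GA) w = (inverse (q^2) \<cdot> (nc_var GA \<otimes> nc_var GC) + k3 \<cdot> aw_beta q - k4 \<cdot> nc_var GB) w"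
    using q0 q4' qp1 qm1
    unfolding aw_beta_def var_var nc_add_eq nc_diff_eq
    using t1 t2 t3 by (auto simp: nc_var_word smult_apply word_def)
qed

lemma E3: "nc_var GC \<otimes> nc_var GB = q^2 \<cdot> (nc_var GB \<otimes> nc_var GC) - k1 \<cdot> aw_alpha q + k2 \<cdot> nc_var GA"
proof (rule ext)
  fix w
  show "(nc_var GC \<otimes> nc_var GB) w = (q^2 \<cdot> (nc_var GB \<otimes> nc_var GC) - k1 \<cdot> aw_alpha q + k2 \<cdot> nc_var GA) w"
    using q0 q4' qp1 qm1
    by (auto simp: nc_var_word word_mult_word aw_alpha_def smult_apply word_def k1_def k2_def field_simps)
       (auto simp: eval_nat_numeral algebra_simps)
qed

fun npow :: "'a ncpoly \<Rightarrow> nat \<Rightarrow> 'a ncpoly" where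
  "npow p 0 = nc_one" | "npow p (Suc n) = p \<otimes> npow p n"

lemma fin_npow[simp]: "fin p \<Longrightarrow> fin (npow p n)" by (induction n) auto

definition wd :: "nat \<Rightarrow> nat \<Rightarrow> nat \<Rightarrow> gen list" where
  "wd i j k = replicate i GA @ replicate j GB @ replicate k GC"

fun Pm :: "mon \<Rightarrow> 'a ncpoly" where
  "Pm (M i j k r s t) = word (wd i j k) \<otimes> (npow (aw_alpha q) r \<otimes> (npow (aw_beta q) s \<otimes> npow (aw_gamma q) t))"

lemma fin_Pm[simp]: "fin (Pm m)" by (cases m) auto

definition Sv :: "'a vec \<Rightarrow> 'a ncpoly" where
  "Sv v = (\<Sum>m\<in>{m. v m \<noteq> 0}. v m \<cdot> Pm m)"

lemma Sv_superset: assumes "{m. v m \<noteq> 0} \<subseteq> S" "finite S"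
  shows "Sv v = (\<Sum>m\<in>S. v m \<cdot> Pm m)"
  unfolding Sv_def by (rule sum.mono_neutral_left) (use assms in \<open>auto simp: smult_zero\<close>)

lemma fin_Sv[simp]: "fin (Sv v)" by (simp add: Sv_def)

lemma Sv_add: assumes "vfin u" "vfin w" shows "Sv (u + w) = Sv u + Sv w"
proof -
  let ?S = "{m. u m \<noteq> 0} \<union> {m. w m \<noteq> 0}"
  have f: "finite ?S" using assms by (simp add: vfin_def)
  show ?thesis
    apply (subst (1 2 3) Sv_superset[where S="?S"])
    using f by (auto simp: sum.distrib[symmetric] add_smult)
qed

lemma Sv_sv: assumes "vfin u" shows "Sv (sv c u) = c \<cdot> Sv u"
proof -
  let ?S = "{m. u m \<noteq> 0}"
  have f: "finite ?S" using assms by (simp add: vfin_def)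
  show ?thesis
    apply (subst (1 2) Sv_superset[where S="?S"])
    using f by (auto simp: sv_apply smult_sum smult_smult)
qed

lemma Sv_zero: "Sv 0 = 0" by (simp add: Sv_def)

lemma Sv_diff: assumes "vfin u" "vfin w" shows "Sv (u - w) = Sv u - Sv w"
proof -
  have "Sv u = Sv ((u - w) + w)" by simp
  also have "\<dots> = Sv (u - w) + Sv w" using Sv_add[OF vfin_diff[OF assms] assms(2)] .
  finally show ?thesis by simp
qed

lemma Sv_sum: "(\<And>i. i \<in> I \<Longrightarrow> vfin (f i)) \<Longrightarrow> Sv (sum f I) = (\<Sum>i\<in>I. Sv (f i))"
  by (induction I rule: infinite_finite_induct) (auto simp: Sv_zero Sv_add)

lemma Sv_ev: "Sv (ev m) = Pm m"
  by (simp add: Sv_def ev_def smult_one)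

lemma Sv_lin: assumes "lin L" "vfin v" "\<And>m. v m \<noteq> 0 \<Longrightarrow> eqv q (p \<otimes> Pm m) (Sv (L (ev m)))" "fin p"
  shows "eqv q (p \<otimes> Sv v) (Sv (L v))"
proof -
  let ?S = "{m. v m \<noteq> 0}"
  have "p \<otimes> Sv v = (\<Sum>m\<in>?S. v m \<cdot> (p \<otimes> Pm m))"
    by (simp add: Sv_def mult_sum_right mult_smult_right)
  moreover have "Sv (L v) = (\<Sum>m\<in>?S. v m \<cdot> Sv (L (ev m)))"
  proof -
    have "L v = L (\<Sum>m\<in>?S. sv (v m) (ev m))" using vec_decomp[OF assms(2)] by simp
    also have "\<dots> = (\<Sum>m\<in>?S. sv (v m) (L (ev m)))" using assms(1) by (simp add: lin_sum lin_sv)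
    finally show ?thesis using assms(1) by (simp add: Sv_sum Sv_sv lin_vfin)
  qed
  moreover have "eqv q (\<Sum>m\<in>?S. v m \<cdot> (p \<otimes> Pm m)) (\<Sum>m\<in>?S. v m \<cdot> Sv (L (ev m)))"
    by (rule eqv_sum) (auto intro: eqv_smult assms(3))
  ultimately show ?thesis by simp
qed

lemma cmove: "c \<in> aw_center q \<Longrightarrow> fin y \<Longrightarrow> fin z \<Longrightarrow> eqv q (c \<otimes> (y \<otimes> z)) (y \<otimes> (c \<otimes> z))"
  by (metis center_commutes commutes_def eqv_rmult mult_assoc)

lemma Pm_A: "nc_var GA \<otimes> Pm (M i j k r s t) = Pm (M (Suc i) j k r s t)"
  by (simp add: nc_var_word wd_def flip: mult_assoc add: word_mult_word)
lemma Pm_B: "nc_var GB \<otimes> Pm (M 0 j k r s t) = Pm (M 0 (Suc j) k r s t)"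
  by (simp add: nc_var_word wd_def flip: mult_assoc add: word_mult_word)
lemma Pm_C: "nc_var GC \<otimes> Pm (M 0 0 k r s t) = Pm (M 0 0 (Suc k) r s t)"
  by (simp add: nc_var_word wd_def flip: mult_assoc add: word_mult_word)

lemma Pm_alpha: "eqv q (aw_alpha q \<otimes> Pm (M i j k r s t)) (Pm (M i j k (Suc r) s t))"
  by (simp add: cmove center_alpha mult_assoc)
lemma Pm_beta: "eqv q (aw_beta q \<otimes> Pm (M i j k r s t)) (Pm (M i j k r (Suc s) t))"
proof -
  let ?W = "word (wd i j k)" and ?a = "npow (aw_alpha q) r" and ?b = "npow (aw_beta q) s" and ?c = "npow (aw_gamma q) t"
  have "eqv q (aw_beta q \<otimes> (?W \<otimes> (?a \<otimes> (?b \<otimes> ?c)))) (?W \<otimes> (aw_beta q \<otimes> (?a \<otimes> (?b \<otimes> ?c))))"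
    by (simp add: cmove center_beta)
  moreover have "eqv q (?W \<otimes> (aw_beta q \<otimes> (?a \<otimes> (?b \<otimes> ?c)))) (?W \<otimes> (?a \<otimes> (aw_beta q \<otimes> (?b \<otimes> ?c))))"
    by (simp add: cmove center_beta eqv_lmult)
  ultimately show ?thesis by (simp add: mult_assoc eqv_trans)
qed
lemma Pm_gamma: "eqv q (aw_gamma q \<otimes> Pm (M i j k r s t)) (Pm (M i j k r s (Suc t)))"
proof -
  let ?W = "word (wd i j k)" and ?a = "npow (aw_alpha q) r" and ?b = "npow (aw_beta q) s" and ?c = "npow (aw_gamma q) t"
  have "eqv q (aw_gamma q \<otimes> (?W \<otimes> (?a \<otimes> (?b \<otimes> ?c)))) (?W \<otimes> (aw_gamma q \<otimes> (?a \<otimes> (?b \<otimes> ?c))))"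
    by (simp add: cmove center_gamma)
  moreover have "eqv q (?W \<otimes> (aw_gamma q \<otimes> (?a \<otimes> (?b \<otimes> ?c)))) (?W \<otimes> (?a \<otimes> (aw_gamma q \<otimes> (?b \<otimes> ?c))))"
    by (simp add: cmove center_gamma eqv_lmult)
  moreover have "eqv q (?W \<otimes> (?a \<otimes> (aw_gamma q \<otimes> (?b \<otimes> ?c)))) (?W \<otimes> (?a \<otimes> (?b \<otimes> (aw_gamma q \<otimes> ?c))))"
    by (simp add: cmove center_gamma eqv_lmult)
  ultimately show ?thesis by (simp add: mult_assoc eqv_trans)
qed

end


context aw begin

declare Pm.simps[simp del]

definition "LB m \<longleftrightarrow> eqv q (nc_var GB \<otimes> Pm m) (Sv (Yop (ev m)))"
definition "LC m \<longleftrightarrow> eqv q (nc_var GC \<otimes> Pm m) (Sv (Zop (ev m)))"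

lemma LA: "nc_var GA \<otimes> Pm m = Sv (XX (ev m))"
  by (cases m) (simp del: Pm.simps add: ev_mA[symmetric] Sv_ev Pm_A)

lemma VA: "vfin v \<Longrightarrow> eqv q (nc_var GA \<otimes> Sv v) (Sv (XX v))"
  by (rule Sv_lin[OF lin_XX]) (auto simp: LA eqv_refl)

lemma Sv_cs_alpha: "eqv q (aw_alpha q \<otimes> Pm m) (Sv (Ma' (ev m)))"
  by (cases m) (simp del: Pm.simps add: shiftop_ev inj_cs Sv_ev Pm_alpha)
lemma Sv_cs_beta: "eqv q (aw_beta q \<otimes> Pm m) (Sv (Mb' (ev m)))"
  by (cases m) (simp del: Pm.simps add: shiftop_ev inj_cs Sv_ev Pm_beta)
lemma Sv_cs_gamma: "eqv q (aw_gamma q \<otimes> Pm m) (Sv (Mc' (ev m)))"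
  by (cases m) (simp del: Pm.simps add: shiftop_ev inj_cs Sv_ev Pm_gamma)

lemmas [trans] = eqv_trans

lemma VB: assumes "vfin v" "\<And>m. v m \<noteq> 0 \<Longrightarrow> LB m" shows "eqv q (nc_var GB \<otimes> Sv v) (Sv (Yop v))"
  by (rule Sv_lin[OF lin_Y assms(1)]) (use assms(2) in \<open>auto simp: LB_def\<close>)
lemma VC: assumes "vfin v" "\<And>m. v m \<noteq> 0 \<Longrightarrow> LC m" shows "eqv q (nc_var GC \<otimes> Sv v) (Sv (Zop v))"
  by (rule Sv_lin[OF lin_Z assms(1)]) (use assms(2) in \<open>auto simp: LC_def\<close>)

lemma LB_step:
  assumes IH: "\<And>m. deg m < d \<Longrightarrow> LB m \<and> LC m" and dm: "deg m = d"
  shows "LB m"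
proof -
  obtain i j k r s t where m: "m = M i j k r s t" by (cases m)
  show ?thesis
  proof (cases i)
    case 0 then show ?thesis using m
      by (simp add: LB_def Yop_def Ym_A0 Sv_ev Pm_B eqv_refl)
  next
    case (Suc i')
    let ?m = "M i' j k r s t"
    let ?e = "ev ?m :: 'a vec"
    have d': "deg ?m < d" using dm m Suc by simp
    have ih: "LB ?m" "LC ?m" using IH[OF d'] by auto
    have "eqv q (nc_var GB \<otimes> Pm m) ((nc_var GB \<otimes> nc_var GA) \<otimes> Pm ?m)"
      using m Suc by (intro eqv_eq) (simp add: Pm_A[symmetric] mult_assoc)
    also have "eqv q \<dots> (q^2 \<cdot> (nc_var GA \<otimes> (nc_var GB \<otimes> Pm ?m)) - k1 \<cdot> (aw_gamma q \<otimes> Pm ?m) + k2 \<cdot> (nc_var GC \<otimes> Pm ?m))"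
      by (intro eqv_eq) (simp add: E1 mult_add_left mult_diff_left mult_smult_left mult_assoc)
    also have "eqv q \<dots> (q^2 \<cdot> (nc_var GA \<otimes> Sv (Yop ?e)) - k1 \<cdot> Sv (Mc' ?e) + k2 \<cdot> Sv (Zop ?e))"
      using ih by (intro eqv_add eqv_diff eqv_smult eqv_lmult Sv_cs_gamma) (auto simp: LB_def LC_def)
    also have "eqv q \<dots> (q^2 \<cdot> Sv (XX (Yop ?e)) - k1 \<cdot> Sv (Mc' ?e) + k2 \<cdot> Sv (Zop ?e))"
      by (intro eqv_add eqv_diff eqv_smult eqv_refl VA) simp
    also have "eqv q \<dots> (Sv (sv (q^2) (XX (Yop ?e)) - sv k1 (Mc' ?e) + sv k2 (Zop ?e)))"
      by (intro eqv_eq) (simp add: Sv_add Sv_diff Sv_sv)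
    also have "eqv q \<dots> (Sv (Yop (ev m)))"
    proof (intro eqv_eq)
      have "ev m = XX ?e" using m Suc by (simp add: shiftop_ev inj_mA)
      then show "Sv (sv (q^2) (XX (Yop ?e)) - sv k1 (Mc' ?e) + sv k2 (Zop ?e)) = Sv (Yop (ev m))"
        by (simp only: rel2[OF vfin_ev])
    qed
    finally show ?thesis by (simp add: LB_def)
  qed
qed

lemma LC_step:
  assumes IH: "\<And>m. deg m < d \<Longrightarrow> LB m \<and> LC m" and IHB: "\<And>m. deg m \<le> d \<Longrightarrow> LB m" and dm: "deg m = d"
  shows "LC m"
proof -
  obtain i j k r s t where m: "m = M i j k r s t" by (cases m)
  show ?thesis
  proof (cases i)
    case (Suc i')
    let ?m = "M i' j k r s t"
    let ?e = "ev ?m :: 'a vec"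
    have d': "deg ?m < d" using dm m Suc by simp
    have ih: "LB ?m" "LC ?m" using IH[OF d'] by auto
    have "eqv q (nc_var GC \<otimes> Pm m) ((nc_var GC \<otimes> nc_var GA) \<otimes> Pm ?m)"
      using m Suc by (intro eqv_eq) (simp add: Pm_A[symmetric] mult_assoc)
    also have "eqv q \<dots> (inverse (q^2) \<cdot> (nc_var GA \<otimes> (nc_var GC \<otimes> Pm ?m)) + k3 \<cdot> (aw_beta q \<otimes> Pm ?m) - k4 \<cdot> (nc_var GB \<otimes> Pm ?m))"
      by (intro eqv_eq) (simp add: E2 mult_add_left mult_diff_left mult_smult_left mult_assoc)
    also have "eqv q \<dots> (inverse (q^2) \<cdot> (nc_var GA \<otimes> Sv (Zop ?e)) + k3 \<cdot> Sv (Mb' ?e) - k4 \<cdot> Sv (Yop ?e))"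
      using ih by (intro eqv_add eqv_diff eqv_smult eqv_lmult Sv_cs_beta) (auto simp: LB_def LC_def)
    also have "eqv q \<dots> (inverse (q^2) \<cdot> Sv (XX (Zop ?e)) + k3 \<cdot> Sv (Mb' ?e) - k4 \<cdot> Sv (Yop ?e))"
      by (intro eqv_add eqv_diff eqv_smult eqv_refl VA) simp
    also have "eqv q \<dots> (Sv (sv (inverse (q^2)) (XX (Zop ?e)) + sv k3 (Mb' ?e) - sv k4 (Yop ?e)))"
      by (intro eqv_eq) (simp add: Sv_add Sv_diff Sv_sv)
    also have "eqv q \<dots> (Sv (Zop (ev m)))"
    proof (intro eqv_eq)
      have "ev m = XX ?e" using m Suc by (simp add: shiftop_ev inj_mA)
      then show "Sv (sv (inverse (q^2)) (XX (Zop ?e)) + sv k3 (Mb' ?e) - sv k4 (Yop ?e)) = Sv (Zop (ev m))"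
        by (simp only: rel3[OF vfin_ev])
    qed
    finally show ?thesis by (simp add: LC_def)
  next
    case 0
    show ?thesis
    proof (cases j)
      case 0 then show ?thesis using m \<open>i = 0\<close>
        by (simp add: LC_def Zop_def Zm_00 Sv_ev Pm_C eqv_refl)
    next
      case (Suc j')
      let ?m = "M 0 j' k r s t"
      let ?e = "ev ?m :: 'a vec"
      have d': "deg ?m < d" using dm m Suc \<open>i = 0\<close> by simp
      have ih: "LB ?m" "LC ?m" using IH[OF d'] by auto
      have supp: "\<And>m1. Zop ?e m1 \<noteq> 0 \<Longrightarrow> LB m1"
      proof -
        fix m1 assume "Zop ?e m1 \<noteq> 0"
        then have "deg m1 \<le> d" using lowdeg_Zm[of ?m] dm m Suc \<open>i = 0\<close> by (auto simp: Zop_def lowdeg_def)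
        then show "LB m1" by (rule IHB)
      qed
      have "eqv q (nc_var GC \<otimes> Pm m) ((nc_var GC \<otimes> nc_var GB) \<otimes> Pm ?m)"
        using m Suc \<open>i = 0\<close> by (intro eqv_eq) (simp add: Pm_B[symmetric] mult_assoc)
      also have "eqv q \<dots> (q^2 \<cdot> (nc_var GB \<otimes> (nc_var GC \<otimes> Pm ?m)) - k1 \<cdot> (aw_alpha q \<otimes> Pm ?m) + k2 \<cdot> (nc_var GA \<otimes> Pm ?m))"
        by (intro eqv_eq) (simp add: E3 mult_add_left mult_diff_left mult_smult_left mult_assoc)
      also have "eqv q \<dots> (q^2 \<cdot> (nc_var GB \<otimes> Sv (Zop ?e)) - k1 \<cdot> Sv (Ma' ?e) + k2 \<cdot> Sv (XX ?e))"
        using ih by (intro eqv_add eqv_diff eqv_smult eqv_lmult Sv_cs_alpha) (auto simp: LB_def LC_def LA eqv_refl)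
      also have "eqv q \<dots> (q^2 \<cdot> Sv (Yop (Zop ?e)) - k1 \<cdot> Sv (Ma' ?e) + k2 \<cdot> Sv (XX ?e))"
        by (intro eqv_add eqv_diff eqv_smult eqv_refl VB supp) simp
      also have "eqv q \<dots> (Sv (sv (q^2) (Yop (Zop ?e)) - sv k1 (Ma' ?e) + sv k2 (XX ?e)))"
        by (intro eqv_eq) (simp add: Sv_add Sv_diff Sv_sv)
      also have "eqv q \<dots> (Sv (Zop (ev m)))"
      proof (intro eqv_eq)
        have "ev m = Yop ?e" using m Suc \<open>i = 0\<close> by (simp add: Yop_def Ym_A0)
        then show "Sv (sv (q^2) (Yop (Zop ?e)) - sv k1 (Ma' ?e) + sv k2 (XX ?e)) = Sv (Zop (ev m))"
          by (simp only: rel1[OF vfin_ev])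
      qed
      finally show ?thesis by (simp add: LC_def)
    qed
  qed
qed

lemma LBC: "LB m \<and> LC m"
proof (induction "deg m" arbitrary: m rule: less_induct)
  case less
  define d where "d = deg m"
  have IH: "\<And>m'. deg m' < d \<Longrightarrow> LB m' \<and> LC m'" using less d_def by blast
  have IHB: "\<And>m'. deg m' \<le> d \<Longrightarrow> LB m'"
    using IH LB_step[OF IH] by (metis le_neq_implies_less)
  show ?case using IHB[of m] LC_step[OF IH IHB] d_def by auto
qed

lemma completeness_word: "eqv q (word w) (Sv (rw w (ev (M 0 0 0 0 0 0))))"
proof (induction w)
  case Nil
  then show ?case by (simp add: Sv_ev Pm.simps wd_def mult_one_left eqv_refl flip: nc_one_word)
next
  case (Cons g w)
  let ?v = "rw w (ev (M 0 0 0 0 0 0)) :: 'a vec"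
  have v: "vfin ?v" by (simp add: lin_vfin[OF lin_rw])
  have "eqv q (word (g # w)) (nc_var g \<otimes> Sv ?v)"
    using Cons by (simp add: var_mult_word[symmetric] eqv_lmult)
  also have "eqv q \<dots> (Sv (opg g ?v))"
    using v LBC by (cases g) (auto intro: VA VB VC)
  finally show ?case by simp
qed

definition "nf x = rho x (ev (M 0 0 0 0 0 0))"

lemma vfin_nf[simp]: "vfin (nf x)" by (simp add: nf_def)

lemma completeness: assumes "fin x" shows "eqv q x (Sv (nf x))"
proof -
  let ?S = "{w. x w \<noteq> 0}"
  let ?e = "ev (M 0 0 0 0 0 0) :: 'a vec"
  have "eqv q (\<Sum>w\<in>?S. x w \<cdot> word w) (\<Sum>w\<in>?S. x w \<cdot> Sv (rw w ?e))"
    by (intro eqv_sum eqv_smult completeness_word)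
  moreover have "(\<Sum>w\<in>?S. x w \<cdot> Sv (rw w ?e)) = Sv (nf x)"
    by (simp add: nf_def rho_def Sv_sum Sv_sv lin_vfin[OF lin_rw])
  ultimately show ?thesis using decomp[OF assms] by simp
qed

lemma ideal_iff: "fin x \<Longrightarrow> x \<in> aw_ideal q \<longleftrightarrow> nf x = 0"
proof
  assume "x \<in> aw_ideal q" then show "nf x = 0" by (simp add: nf_def soundness)
next
  assume f: "fin x" and n: "nf x = 0"
  have "eqv q x (Sv (nf x))" by (rule completeness[OF f])
  then show "x \<in> aw_ideal q" using n by (simp add: eqv_def Sv_zero)
qed

end


context aw begin

definition "RO v = sv q (XX (Yop (Zop v))) + sv (q^2) (XX (XX v)) + sv (inverse (q^2)) (Yop (Yop v))
   + sv (q^2) (Zop (Zop v)) - sv q (XX (Ma' v)) - sv (inverse q) (Yop (Mb' v)) - sv q (Zop (Mc' v))"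

lemma rho_Omega: "vfin v \<Longrightarrow> rho (aw_Omega q) v = RO v"
  by (simp add: aw_Omega_def RO_def rho_add rho_diff rho_smult rho_mult rho_var rho_alpha rho_beta rho_gamma)

lemma Y_add: "vfin u \<Longrightarrow> vfin w \<Longrightarrow> Yop (u + w) = Yop u + Yop w" by (rule lin_add[OF lin_Y])
lemma Y_diff: "vfin u \<Longrightarrow> vfin w \<Longrightarrow> Yop (u - w) = Yop u - Yop w" by (rule lin_diff[OF lin_Y])
lemma Y_sv: "vfin u \<Longrightarrow> Yop (sv c u) = sv c (Yop u)" by (rule lin_sv[OF lin_Y])
lemma Z_add: "vfin u \<Longrightarrow> vfin w \<Longrightarrow> Zop (u + w) = Zop u + Zop w" by (rule lin_add[OF lin_Z])
lemma Z_diff: "vfin u \<Longrightarrow> vfin w \<Longrightarrow> Zop (u - w) = Zop u - Zop w" by (rule lin_diff[OF lin_Z])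
lemma Z_sv: "vfin u \<Longrightarrow> Zop (sv c u) = sv c (Zop u)" by (rule lin_sv[OF lin_Z])

lemma shiftop_comp: "inj f \<Longrightarrow> inj g \<Longrightarrow> shiftop f (shiftop g v) = shiftop (f \<circ> g) v"
proof (rule ext)
  fix m assume f: "inj f" and g: "inj g"
  show "shiftop f (shiftop g v) m = shiftop (f \<circ> g) v m"
  proof (cases "m \<in> range (f \<circ> g)")
    case True
    then obtain m0 where "m = f (g m0)" by auto
    then show ?thesis using f g by (simp add: shiftop_apply inj_compose[OF f g] shiftop_apply[of "f \<circ> g", simplified])
  next
    case False
    then show ?thesis using f g
      by (auto simp: shiftop_apply0 shiftop_def image_iff the_inv_f_f split: if_splits)
  qed
qed

lemma cs_cs: "shiftop (cshift a b c) (shiftop (cshift a' b' c') v) = shiftop (cshift (a + a') (b + b') (c + c')) v"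
proof -
  have "cshift a b c \<circ> cshift a' b' c' = cshift (a + a') (b + b') (c + c')"
    by (rule ext, case_tac x) auto
  then show ?thesis by (simp add: shiftop_comp inj_cs)
qed

lemmas norm_simps = cs_cs Y_add Y_diff Y_sv Z_add Z_diff Z_sv shift_add shift_diff shift_sv
  rel1 rel2 rel3 XX_cs[symmetric] Y_cs[symmetric] Z_cs[symmetric] sv_sv sv_add sv_diff

lemma Om_X: assumes "vfin v" shows "RO (XX v) = XX (RO v)"
proof -
  show ?thesis using assms
    apply (simp add: RO_def norm_simps)
    apply (rule ext)
    apply (simp add: sv_apply k1_def k2_def k3_def k4_def)
    apply (simp add: field_simps q0)
    apply (simp add: algebra_simps eval_nat_numeral)
    done
qed

lemma Om_Y: assumes "vfin v" shows "RO (Yop v) = Yop (RO v)"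
  using assms
  apply (simp add: RO_def norm_simps)
  apply (rule ext)
  apply (simp add: sv_apply k1_def k2_def k3_def k4_def)
  apply (simp add: field_simps q0)
  apply (simp add: algebra_simps eval_nat_numeral)
  done

lemma Om_Z: assumes "vfin v" shows "RO (Zop v) = Zop (RO v)"
  using assms
  apply (simp add: RO_def norm_simps)
  apply (rule ext)
  apply (simp add: sv_apply k1_def k2_def k3_def k4_def)
  apply (simp add: field_simps q0)
  apply (simp add: algebra_simps eval_nat_numeral)
  done

lemma center_Omega: "aw_Omega q \<in> aw_center q"
proof (rule center_of_gens)
  show "fin (aw_Omega q)" by simp
  fix g
  let ?e = "ev (M 0 0 0 0 0 0) :: 'a vec"
  have "nf (aw_Omega q \<otimes> nc_var g - nc_var g \<otimes> aw_Omega q) = RO (opg g ?e) - opg g (RO ?e)"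
    by (simp add: nf_def rho_diff rho_mult rho_var rho_Omega lin_vfin[OF lin_opg])
  also have "\<dots> = 0" by (cases g) (simp_all add: Om_X Om_Y Om_Z)
  finally have "aw_Omega q \<otimes> nc_var g - nc_var g \<otimes> aw_Omega q \<in> aw_ideal q"
    by (subst ideal_iff) simp_all
  then show "commutes q (aw_Omega q) (nc_var g)" by (simp add: commutes_def eqv_def)
qed

end


lemma lowdeg_at: "lowdeg d (w - u) \<Longrightarrow> d < deg m \<Longrightarrow> w m = u m"
  by (auto simp: lowdeg_def)

context aw begin

definition "cZ i j = q^(2*j) * inverse (q^(2*i))"

lemma lowdeg_Y: assumes "lowdeg d v" shows "lowdeg (Suc d) (Yop v)"
  unfolding Yop_def
proof (rule lowdeg_ext[OF assms])
  fix m assume "v m \<noteq> 0"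
  then have "deg m \<le> d" using assms by (simp add: lowdeg_def)
  then show "lowdeg (Suc d) (Ym m)" using lowdeg_mono[OF lowdeg_Ym[of m]] by simp
qed
lemma lowdeg_Z: assumes "lowdeg d v" shows "lowdeg (Suc d) (Zop v)"
  unfolding Zop_def
proof (rule lowdeg_ext[OF assms])
  fix m assume "v m \<noteq> 0"
  then have "deg m \<le> d" using assms by (simp add: lowdeg_def)
  then show "lowdeg (Suc d) (Zm m)" using lowdeg_mono[OF lowdeg_Zm[of m]] by simp
qed

lemma lead_Y: "lowdeg (deg (M i j k r s t)) (Ym (M i j k r s t) - sv (q^(2*i)) (ev (M i (Suc j) k r s t)))"
proof (induction i)
  case 0 then show ?case by (simp add: Ym_A0 lowdeg_def sv_def)
next
  case (Suc i)
  let ?m = "M i j k r s t"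
  have IH: "lowdeg (deg ?m) (Ym ?m - sv (q^(2*i)) (ev (M i (Suc j) k r s t)))"
    using Suc.IH by (simp add: fun_diff_def)
  have "Ym (M (Suc i) j k r s t) - sv (q^(2*Suc i)) (ev (M (Suc i) (Suc j) k r s t)) =
        sv (q^2) (XX (Ym ?m - sv (q^(2*i)) (ev (M i (Suc j) k r s t)))) - sv k1 (ev (M i j k r s (Suc t))) + sv k2 (Zm ?m)"
    by (simp add: Ym_AS shift_diff shift_sv shiftop_ev inj_mA sv_sv fun_eq_iff sv_apply power_add power_mult)
       (simp add: algebra_simps power2_eq_square)
  moreover have "lowdeg (deg (M (Suc i) j k r s t)) \<dots>"
    using lowdeg_X[OF IH] lowdeg_Zm[of ?m]
    by (intro lowdeg_add lowdeg_diff lowdeg_sv lowdeg_ev) simp_all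
  ultimately have "lowdeg (deg (M (Suc i) j k r s t)) (Ym (M (Suc i) j k r s t) - sv (q^(2*Suc i)) (ev (M (Suc i) (Suc j) k r s t)))"
    by simp
  then show ?case by (simp add: fun_diff_def)
qed

definition "approx d w c m \<longleftrightarrow> lowdeg d (w - sv c (ev m))"

lemma lead_Y': "approx (deg m) (Ym m) (q^(2 * (case m of M i j k r s t \<Rightarrow> i))) (case m of M i j k r s t \<Rightarrow> M i (Suc j) k r s t)"
  by (cases m) (simp add: approx_def lead_Y del: deg.simps)

lemma lead_Z0: "approx (deg (M 0 j k r s t)) (Zm (M 0 j k r s t)) (q^(2*j)) (M 0 j (Suc k) r s t)"
proof (induction j)
  case 0 then show ?case by (simp add: Zm_00 approx_def lowdeg_def sv_def)
next
  case (Suc j)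
  let ?m = "M 0 j k r s t" and ?c = "q^(2*j)" and ?t = "M 0 j (Suc k) r s t"
  have IH: "lowdeg (deg ?m) (Zm ?m - sv ?c (ev ?t))" using Suc.IH by (simp add: approx_def)
  have "Zm (M 0 (Suc j) k r s t) - sv (q^(2 * Suc j)) (ev (M 0 (Suc j) (Suc k) r s t)) =
     sv (q^2) (Yop (Zm ?m - sv ?c (ev ?t))) - sv k1 (ev (M 0 j k (Suc r) s t)) + sv k2 (ev (M 1 j k r s t))"
    by (simp add: Zm_0S Y_diff Y_sv Yop_def[symmetric] Ym_A0 fun_eq_iff sv_apply algebra_simps power_add power_mult)
       (simp add: Yop_def Ym_A0 algebra_simps power2_eq_square)
  moreover have "lowdeg (deg (M 0 (Suc j) k r s t)) \<dots>"
    using lowdeg_Y[OF IH]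
    by (intro lowdeg_add lowdeg_diff lowdeg_sv lowdeg_ev) simp_all
  ultimately show ?case by (simp add: approx_def)
qed

lemma lead_Z: "approx (deg (M i j k r s t)) (Zm (M i j k r s t)) (cZ i j) (M i j (Suc k) r s t)"
proof (induction i)
  case 0 then show ?case using lead_Z0 by (simp add: cZ_def)
next
  case (Suc i)
  let ?m = "M i j k r s t" and ?c = "cZ i j" and ?t = "M i j (Suc k) r s t"
  have IH: "lowdeg (deg ?m) (Zm ?m - sv ?c (ev ?t))" using Suc.IH by (simp add: approx_def)
  have cs: "cZ (Suc i) j = inverse (q^2) * cZ i j"
    by (simp add: cZ_def power_add power_mult algebra_simps inverse_mult_distrib power2_eq_square)
  have "Zm (M (Suc i) j k r s t) - sv (cZ (Suc i) j) (ev (M (Suc i) j (Suc k) r s t)) =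
     sv (inverse (q^2)) (XX (Zm ?m - sv ?c (ev ?t))) + sv k3 (ev (M i j k r (Suc s) t)) - sv k4 (Ym ?m)"
    unfolding cs
    by (simp add: Zm_AS shift_diff shift_sv shiftop_ev inj_mA sv_sv fun_eq_iff sv_apply algebra_simps)
  moreover have "lowdeg (deg (M (Suc i) j k r s t)) \<dots>"
    using lowdeg_X[OF IH] lowdeg_Ym[of ?m]
    by (intro lowdeg_add lowdeg_diff lowdeg_sv lowdeg_ev) simp_all
  ultimately show ?case by (simp add: approx_def)
qed

lemma approx_at: "approx d w c m \<Longrightarrow> d < deg m' \<Longrightarrow> w m' = (if m' = m then c else 0)"
  unfolding approx_def by (drule lowdeg_at) (auto simp: sv_apply ev_def)

lemma approx_Y: assumes w: "vfin w" and a: "approx d w c (M i j k r s t)" and dm: "i + j + k = Suc d"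
  shows "approx (Suc d) (Yop w) (c * q^(2*i)) (M i (Suc j) k r s t)"
proof -
  let ?m = "M i j k r s t"
  have "Yop w - sv (c * q^(2*i)) (ev (M i (Suc j) k r s t)) =
        Yop (w - sv c (ev ?m)) + sv c (Ym ?m - sv (q^(2*i)) (ev (M i (Suc j) k r s t)))"
    using w by (simp add: Y_diff Y_sv Yop_def[symmetric] fun_eq_iff sv_apply algebra_simps) (simp add: Yop_def)
  moreover have "lowdeg (Suc d) \<dots>"
    using lowdeg_Y[OF a[unfolded approx_def]] lead_Y[of i j k r s t] dm
    by (intro lowdeg_add lowdeg_sv) simp_all
  ultimately show ?thesis by (simp add: approx_def)
qed

lemma approx_Z: assumes w: "vfin w" and a: "approx d w c (M i j k r s t)" and dm: "i + j + k = Suc d"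
  shows "approx (Suc d) (Zop w) (c * cZ i j) (M i j (Suc k) r s t)"
proof -
  let ?m = "M i j k r s t"
  have "Zop w - sv (c * cZ i j) (ev (M i j (Suc k) r s t)) =
        Zop (w - sv c (ev ?m)) + sv c (Zm ?m - sv (cZ i j) (ev (M i j (Suc k) r s t)))"
    using w by (simp add: Z_diff Z_sv Zop_def[symmetric] fun_eq_iff sv_apply algebra_simps) (simp add: Zop_def)
  moreover have "lowdeg (Suc d) \<dots>"
    using lowdeg_Z[OF a[unfolded approx_def]] lead_Z[of i j k r s t, unfolded approx_def] dm
    by (intro lowdeg_add lowdeg_sv) simp_all
  ultimately show ?thesis by (simp add: approx_def)
qed

lemma approx_X: assumes a: "approx d w c (M i j k r s t)"
  shows "approx (Suc d) (XX w) c (M (Suc i) j k r s t)"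
proof -
  have "XX w - sv c (ev (M (Suc i) j k r s t)) = XX (w - sv c (ev (M i j k r s t)))"
    by (simp add: shift_diff shift_sv shiftop_ev inj_mA)
  then show ?thesis using lowdeg_X[OF a[unfolded approx_def]] by (simp add: approx_def)
qed

lemma rw_rep: "rw (replicate (Suc n) g) w = opg g (rw (replicate n g) w)" by simp

lemma vfin_rw[simp]: "vfin w \<Longrightarrow> vfin (rw u w)" by (simp add: lin_vfin[OF lin_rw])

lemma iterZ: assumes w: "vfin w" and a: "approx d w c (M i j k r s t)" and dm: "i + j + k = Suc d"
  shows "approx (d + n) (rw (replicate n GC) w) (c * cZ i j ^ n) (M i j (k + n) r s t)"
proof (induction n)
  case 0 then show ?case using a by simp
next
  case (Suc n)
  have "approx (Suc (d + n)) (Zop (rw (replicate n GC) w)) (c * cZ i j ^ n * cZ i j) (M i j (Suc (k + n)) r s t)"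
    by (rule approx_Z) (use Suc w dm in auto)
  then show ?case by (simp add: algebra_simps)
qed

lemma iterY: assumes w: "vfin w" and a: "approx d w c (M i j k r s t)" and dm: "i + j + k = Suc d"
  shows "approx (d + n) (rw (replicate n GB) w) (c * (q^(2*i)) ^ n) (M i (j + n) k r s t)"
proof (induction n)
  case 0 then show ?case using a by simp
next
  case (Suc n)
  have "approx (Suc (d + n)) (Yop (rw (replicate n GB) w)) (c * (q^(2*i)) ^ n * q^(2*i)) (M i (Suc (j + n)) k r s t)"
    by (rule approx_Y) (use Suc w dm in auto)
  then show ?case by (simp add: algebra_simps)
qed

lemma iterX: assumes a: "approx d w c (M i j k r s t)"
  shows "approx (d + n) (rw (replicate n GA) w) c (M (i + n) j k r s t)"
proof (induction n)
  case 0 then show ?case using a by simp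
next
  case (Suc n)
  have "approx (Suc (d + n)) (XX (rw (replicate n GA) w)) c (M (Suc (i + n)) j k r s t)"
    by (rule approx_X) (use Suc in auto)
  then show ?case by simp
qed

lemma approx_ev: "deg m = Suc d \<Longrightarrow> approx d (ev m) 1 m"
  by (simp add: approx_def lowdeg_def sv_def)

lemma rw_wd: "rw (wd i j k) w = rw (replicate i GA) (rw (replicate j GB) (rw (replicate k GC) w))"
  by (simp add: wd_def rw_append)

lemma approx_A: "approx (i + j + k) (rw (wd i j k) (ev (M 1 0 0 r s t))) (inverse (q^2) ^ k * (q^2) ^ j) (M (Suc i) j k r s t)"
proof -
  have a0: "approx 0 (ev (M 1 0 0 r s t)) 1 (M 1 0 0 r s t)" by (rule approx_ev) simp
  have a1: "approx k (rw (replicate k GC) (ev (M 1 0 0 r s t))) (inverse (q^2) ^ k) (M 1 0 k r s t)"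
    using iterZ[OF vfin_ev a0, of k] by (simp add: cZ_def)
  have a2: "approx (k + j) (rw (replicate j GB) (rw (replicate k GC) (ev (M 1 0 0 r s t)))) (inverse (q^2) ^ k * (q^2) ^ j) (M 1 j k r s t)"
    using iterY[OF vfin_rw[OF vfin_ev] a1, of j] by simp
  have a3: "approx (k + j + i) (rw (replicate i GA) (rw (replicate j GB) (rw (replicate k GC) (ev (M 1 0 0 r s t))))) (inverse (q^2) ^ k * (q^2) ^ j) (M (1 + i) j k r s t)"
    using iterX[OF a2, of i] by simp
  then show ?thesis by (simp add: rw_wd algebra_simps)
qed

lemma exact_C: "rw (wd i j k) (ev (M 0 0 (Suc 0) r s t)) = ev (M i j (Suc k) r s t)"
proof -
  have c: "rw (replicate k GC) (ev (M 0 0 (Suc 0) r s t)) = ev (M 0 0 (Suc k) r s t)"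
    by (induction k) (simp_all add: Zop_def Zm_00)
  have b: "rw (replicate j GB) (ev (M 0 0 (Suc k) r s t)) = ev (M 0 j (Suc k) r s t)"
    by (induction j) (simp_all add: Yop_def Ym_A0)
  have a: "rw (replicate i GA) (ev (M 0 j (Suc k) r s t)) = ev (M i j (Suc k) r s t)"
    by (induction i) (simp_all add: shiftop_ev inj_mA)
  show ?thesis by (simp add: rw_wd c b a)
qed

lemma cs0: "shiftop (cshift 0 0 0) w = w"
proof (rule ext)
  fix m
  have "cshift 0 0 0 m = m" by (cases m) auto
  then show "shiftop (cshift 0 0 0) w m = w m" using shiftop_apply[OF inj_cs, of 0 0 0 w m] by simp
qed

lemma rho_npow_alpha: "vfin w \<Longrightarrow> rho (npow (aw_alpha q) n) w = shiftop (cshift n 0 0) w"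
  by (induction n) (simp_all add: rho_one cs0 rho_mult rho_alpha cs_cs)
lemma rho_npow_beta: "vfin w \<Longrightarrow> rho (npow (aw_beta q) n) w = shiftop (cshift 0 n 0) w"
  by (induction n) (simp_all add: rho_one cs0 rho_mult rho_beta cs_cs)
lemma rho_npow_gamma: "vfin w \<Longrightarrow> rho (npow (aw_gamma q) n) w = shiftop (cshift 0 0 n) w"
  by (induction n) (simp_all add: rho_one cs0 rho_mult rho_gamma cs_cs)

lemma rho_Pm: "vfin w \<Longrightarrow> rho (Pm (M i j k r s t)) w = rw (wd i j k) (shiftop (cshift r s t) w)"
  by (simp add: Pm.simps rho_word_mult rho_mult rho_npow_alpha rho_npow_beta rho_npow_gamma cs_cs rho_word)

lemma rho_Sv: assumes "vfin v" "vfin w" shows "rho (Sv v) w = (\<Sum>m\<in>{m. v m \<noteq> 0}. sv (v m) (rho (Pm m) w))"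
  by (simp add: Sv_def rho_sum rho_smult)

lemma rho_nf: assumes "fin x" "vfin w" shows "rho x w = rho (Sv (nf x)) w"
proof -
  have "x - Sv (nf x) \<in> aw_ideal q" using completeness[OF assms(1)] by (simp add: eqv_def)
  then have "rho (x - Sv (nf x)) w = 0" using assms(2) by (rule soundness)
  then show ?thesis using assms by (simp add: rho_diff)
qed

lemma center_nf: assumes "x \<in> aw_center q" shows "rho x (opg g (ev (M 0 0 0 0 0 0))) = opg g (nf x)"
proof -
  have f: "fin x" using assms by (rule center_fin)
  have "x \<otimes> nc_var g - nc_var g \<otimes> x \<in> aw_ideal q"
    using center_commutes[OF assms, of "nc_var g"] by (simp add: commutes_def eqv_def)
  then have "nf (x \<otimes> nc_var g - nc_var g \<otimes> x) = 0" by (simp add: nf_def soundness)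
  then show ?thesis using f by (simp add: nf_def rho_diff rho_mult rho_var)
qed

lemma sum_point: assumes "finite S" "m0 \<in> S" "\<And>m. m \<in> S \<Longrightarrow> f m mt = (if m = m0 then c else 0)"
  shows "(\<Sum>m\<in>S. sv (v m) (f m)) mt = v m0 * c"
proof -
  have "(\<Sum>m\<in>S. sv (v m) (f m)) mt = (\<Sum>m\<in>S. if m = m0 then v m0 * c else 0)"
    using assms(3) by (auto simp: sum_fun_apply sv_apply intro!: sum.cong)
  also have "\<dots> = v m0 * c" using assms(1,2) by simp
  finally show ?thesis .
qed

lemma sum_ext_Zm: "vfin v \<Longrightarrow> Zop v = (\<Sum>m\<in>{m. v m \<noteq> 0}. sv (v m) (Zm m))"
  unfolding Zop_def by (rule ext_sum) (auto simp: vfin_def)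

lemma top_C: assumes x: "x \<in> aw_center q" and low: "lowdeg n (nf x)"
  and nz: "nf x (M i j k r s t) \<noteq> 0" and dn: "i + j + k = n"
  shows "cZ i j = 1"
proof -
  let ?v = "nf x" and ?S = "{m. nf x m \<noteq> 0}" and ?mt = "M i j (Suc k) r s t" and ?m = "M i j k r s t"
  have f: "fin x" using x by (rule center_fin)
  have S: "finite ?S" using vfin_nf[of x] by (simp add: vfin_def)
  have m0: "?m \<in> ?S" using nz by simp
  have e: "Zop (ev (M 0 0 0 0 0 0)) = ev (M 0 0 (Suc 0) 0 0 0)" by (simp add: Zop_def Zm_00)
  have "rho x (opg GC (ev (M 0 0 0 0 0 0))) = opg GC ?v" using center_nf[OF x] .
  moreover have "rho x (ev (M 0 0 (Suc 0) 0 0 0)) = rho (Sv ?v) (ev (M 0 0 (Suc 0) 0 0 0))"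
    by (rule rho_nf[OF f vfin_ev])
  ultimately have eq: "rho (Sv ?v) (ev (M 0 0 (Suc 0) 0 0 0)) = Zop ?v" by (simp add: e)
  have lhs: "rho (Sv ?v) (ev (M 0 0 (Suc 0) 0 0 0)) ?mt = ?v ?m * 1"
    unfolding rho_Sv[OF vfin_nf vfin_ev]
  proof (rule sum_point[OF S m0])
    fix m' assume "m' \<in> ?S"
    obtain i' j' k' r' s' t' where m': "m' = M i' j' k' r' s' t'" by (cases m')
    show "rho (Pm m') (ev (M 0 0 (Suc 0) 0 0 0)) ?mt = (if m' = ?m then 1 else 0)"
      by (simp add: m' rho_Pm shiftop_ev inj_cs exact_C) (auto simp: ev_def)
  qed
  have rhs: "Zop ?v ?mt = ?v ?m * cZ i j"
    unfolding sum_ext_Zm[OF vfin_nf]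
  proof (rule sum_point[OF S m0])
    fix m' assume m'S: "m' \<in> ?S"
    obtain i' j' k' r' s' t' where m': "m' = M i' j' k' r' s' t'" by (cases m')
    have dm': "deg m' \<le> n" using m'S low by (auto simp: lowdeg_def)
    have "Zm m' ?mt = (if ?mt = M i' j' (Suc k') r' s' t' then cZ i' j' else 0)"
      using approx_at[OF lead_Z[of i' j' k' r' s' t']] dm' dn m' by simp
    then show "Zm m' ?mt = (if m' = ?m then cZ i j else 0)" using m' by auto
  qed
  have "?v ?m * 1 = ?v ?m * cZ i j" using eq lhs rhs by simp
  then show ?thesis using nz by simp
qed

lemma top_A: assumes x: "x \<in> aw_center q" and low: "lowdeg n (nf x)"
  and nz: "nf x (M i j k r s t) \<noteq> 0" and dn: "i + j + k = n"
  shows "inverse (q^2) ^ k * (q^2) ^ j = 1"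
proof -
  let ?v = "nf x" and ?S = "{m. nf x m \<noteq> 0}" and ?mt = "M (Suc i) j k r s t" and ?m = "M i j k r s t"
  have f: "fin x" using x by (rule center_fin)
  have S: "finite ?S" using vfin_nf[of x] by (simp add: vfin_def)
  have m0: "?m \<in> ?S" using nz by simp
  have e: "XX (ev (M 0 0 0 0 0 0)) = ev (M 1 0 0 0 0 0)" by (simp add: shiftop_ev inj_mA)
  have "rho x (opg GA (ev (M 0 0 0 0 0 0))) = opg GA ?v" using center_nf[OF x] .
  moreover have "rho x (ev (M 1 0 0 0 0 0)) = rho (Sv ?v) (ev (M 1 0 0 0 0 0))"
    by (rule rho_nf[OF f vfin_ev])
  ultimately have eq: "rho (Sv ?v) (ev (M 1 0 0 0 0 0)) = XX ?v" by (simp only: e opg.simps)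
  have lhs: "rho (Sv ?v) (ev (M 1 0 0 0 0 0)) ?mt = ?v ?m * (inverse (q^2) ^ k * (q^2) ^ j)"
    unfolding rho_Sv[OF vfin_nf vfin_ev]
  proof (rule sum_point[OF S m0])
    fix m' assume m'S: "m' \<in> ?S"
    obtain i' j' k' r' s' t' where m': "m' = M i' j' k' r' s' t'" by (cases m')
    have dm': "deg m' \<le> n" using m'S low by (auto simp: lowdeg_def)
    have r: "rho (Pm m') (ev (M 1 0 0 0 0 0)) = rw (wd i' j' k') (ev (M 1 0 0 r' s' t'))"
      by (simp add: m' rho_Pm shiftop_ev inj_cs)
    have "rho (Pm m') (ev (M 1 0 0 0 0 0)) ?mt = (if ?mt = M (Suc i') j' k' r' s' t' then inverse (q^2) ^ k' * (q^2) ^ j' else 0)"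
      unfolding r using approx_at[OF approx_A[of i' j' k' r' s' t']] dm' dn m' by simp
    then show "rho (Pm m') (ev (M 1 0 0 0 0 0)) ?mt = (if m' = ?m then inverse (q^2) ^ k * (q^2) ^ j else 0)"
      using m' by auto
  qed
  have rhs: "XX ?v ?mt = ?v ?m" using shiftop_apply[OF inj_mA, of ?v ?m] by simp
  have "?v ?m * (inverse (q^2) ^ k * (q^2) ^ j) = ?v ?m * 1" using eq lhs rhs by simp
  then show ?thesis using nz by simp
qed

end

locale aw2 = aw +
  assumes nru: "\<forall>n::nat. n > 0 \<longrightarrow> q ^ n \<noteq> 1"
begin

lemma pow_inj: assumes "(q^2)^j = (q^2)^k" shows "j = k"
proof (rule ccontr)
  assume ne: "j \<noteq> k"
  have gen: "\<And>a b. a < b \<Longrightarrow> (q^2)^a = (q^2)^b \<Longrightarrow> False"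
  proof -
    fix a b :: nat assume ab: "a < b" and eq: "(q^2)^a = (q^2)^b"
    have "(q^2)^b = (q^2)^a * (q^2)^(b - a)" using ab by (simp add: power_add[symmetric])
    then have "(q^2)^(b - a) = 1" using eq q0 by simp
    then have "q ^ (2 * (b - a)) = 1" by (simp add: power_mult)
    moreover have "2 * (b - a) > 0" using ab by simp
    ultimately show False using nru by blast
  qed
  show False
  proof (cases "j < k")
    case True then show ?thesis using gen assms by blast
  next
    case False then have "k < j" using ne by simp
    then show ?thesis using gen assms by metis
  qed
qed

lemma top_form: assumes x: "x \<in> aw_center q" and low: "lowdeg n (nf x)"
  and nz: "nf x (M i j k r s t) \<noteq> 0" and dn: "i + j + k = n"
  shows "j = i \<and> k = j"
proof
  have "cZ i j = 1" by (rule top_C[OF assms])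
  then have "(q^2)^j = (q^2)^i" using q0 by (simp add: cZ_def power_mult field_simps)
       (simp add: power_mult[symmetric] mult.commute)
  then show "j = i" by (rule pow_inj)
  have "inverse (q^2) ^ k * (q^2) ^ j = 1" by (rule top_A[OF assms])
  then have "(q^2)^j = (q^2)^k" using q0 by (simp add: power_inverse field_simps)
  then show "k = j" by (metis pow_inj)
qed

end


context aw begin

lemma lowdeg_cs: "lowdeg d w \<Longrightarrow> lowdeg d (shiftop (cshift a b c) w)"
  by (rule lowdeg_shift) (auto simp: inj_cs)

lemma lowdeg_RO: assumes a: "lowdeg d w" shows "lowdeg (Suc (Suc (Suc d))) (RO w)"
proof -
  have m: "\<And>u n. lowdeg n u \<Longrightarrow> n \<le> Suc (Suc (Suc d)) \<Longrightarrow> lowdeg (Suc (Suc (Suc d))) u" by (rule lowdeg_mono)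
  have 1: "lowdeg (Suc (Suc (Suc d))) (XX (Yop (Zop w)))" using lowdeg_X[OF lowdeg_Y[OF lowdeg_Z[OF a]]] by simp
  have 2: "lowdeg (Suc (Suc (Suc d))) (XX (XX w))" using m[OF lowdeg_X[OF lowdeg_X[OF a]]] by simp
  have 3: "lowdeg (Suc (Suc (Suc d))) (Yop (Yop w))" using m[OF lowdeg_Y[OF lowdeg_Y[OF a]]] by simp
  have 4: "lowdeg (Suc (Suc (Suc d))) (Zop (Zop w))" using m[OF lowdeg_Z[OF lowdeg_Z[OF a]]] by simp
  have 5: "lowdeg (Suc (Suc (Suc d))) (XX (Ma' w))" using m[OF lowdeg_X[OF lowdeg_cs[OF a]]] by simp
  have 6: "lowdeg (Suc (Suc (Suc d))) (Yop (Mb' w))" using m[OF lowdeg_Y[OF lowdeg_cs[OF a]]] by simp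
  have 7: "lowdeg (Suc (Suc (Suc d))) (Zop (Mc' w))" using m[OF lowdeg_Z[OF lowdeg_cs[OF a]]] by simp
  show ?thesis unfolding RO_def using 1 2 3 4 5 6 7
    by (intro lowdeg_add lowdeg_diff lowdeg_sv)
qed

lemma RO_rest: assumes a: "lowdeg d w" shows "lowdeg (Suc (Suc d)) (RO w - sv q (XX (Yop (Zop w))))"
proof -
  have m: "\<And>u n. lowdeg n u \<Longrightarrow> n \<le> Suc (Suc d) \<Longrightarrow> lowdeg (Suc (Suc d)) u" by (rule lowdeg_mono)
  have 2: "lowdeg (Suc (Suc d)) (XX (XX w))" using m[OF lowdeg_X[OF lowdeg_X[OF a]]] by simp
  have 3: "lowdeg (Suc (Suc d)) (Yop (Yop w))" using m[OF lowdeg_Y[OF lowdeg_Y[OF a]]] by simp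
  have 4: "lowdeg (Suc (Suc d)) (Zop (Zop w))" using m[OF lowdeg_Z[OF lowdeg_Z[OF a]]] by simp
  have 5: "lowdeg (Suc (Suc d)) (XX (Ma' w))" using m[OF lowdeg_X[OF lowdeg_cs[OF a]]] by simp
  have 6: "lowdeg (Suc (Suc d)) (Yop (Mb' w))" using m[OF lowdeg_Y[OF lowdeg_cs[OF a]]] by simp
  have 7: "lowdeg (Suc (Suc d)) (Zop (Mc' w))" using m[OF lowdeg_Z[OF lowdeg_cs[OF a]]] by simp
  have e: "RO w - sv q (XX (Yop (Zop w))) = sv (q^2) (XX (XX w)) + sv (inverse (q^2)) (Yop (Yop w))
   + sv (q^2) (Zop (Zop w)) - sv q (XX (Ma' w)) - sv (inverse q) (Yop (Mb' w)) - sv q (Zop (Mc' w))"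
    by (simp add: RO_def fun_eq_iff)
  show ?thesis unfolding e using 2 3 4 5 6 7
    by (intro lowdeg_add lowdeg_diff lowdeg_sv)
qed

lemma approx_low: "approx d w c m \<Longrightarrow> deg m \<le> D \<Longrightarrow> d \<le> D \<Longrightarrow> lowdeg D w"
proof -
  assume a: "approx d w c m" "deg m \<le> D" "d \<le> D"
  have "w = (w - sv c (ev m)) + sv c (ev m)" by simp
  moreover have "lowdeg D (w - sv c (ev m))" using a by (auto simp: approx_def intro: lowdeg_mono)
  moreover have "lowdeg D (sv c (ev m))" using a by (intro lowdeg_sv lowdeg_ev)
  ultimately show ?thesis by (metis lowdeg_add)
qed

lemma RO_step: assumes w: "vfin w" and a: "approx d w c (M l l l r s t)" and dl: "3 * l = Suc d"
  shows "approx (Suc (Suc (Suc d))) (RO w) (c * q^(2 * l + 1)) (M (Suc l) (Suc l) (Suc l) r s t)"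
proof -
  have aZ: "approx (Suc d) (Zop w) (c * cZ l l) (M l l (Suc l) r s t)"
    by (rule approx_Z[OF w a]) (use dl in simp)
  have c1: "cZ l l = 1" using q0 by (simp add: cZ_def)
  have aY: "approx (Suc (Suc d)) (Yop (Zop w)) (c * cZ l l * q^(2*l)) (M l (Suc l) (Suc l) r s t)"
    by (rule approx_Y[OF vfin_Z[OF w] aZ]) (use dl in simp)
  have aX: "approx (Suc (Suc (Suc d))) (XX (Yop (Zop w))) (c * cZ l l * q^(2*l)) (M (Suc l) (Suc l) (Suc l) r s t)"
    by (rule approx_X[OF aY])
  have lw: "lowdeg (Suc d) w" by (rule approx_low[OF a]) (use dl in simp_all)
  have rest: "lowdeg (Suc (Suc (Suc d))) (RO w - sv q (XX (Yop (Zop w))))"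
    using RO_rest[OF lw] by (rule lowdeg_mono) simp
  have e: "RO w - sv (c * q^(2 * l + 1)) (ev (M (Suc l) (Suc l) (Suc l) r s t)) =
      (RO w - sv q (XX (Yop (Zop w)))) + sv q (XX (Yop (Zop w)) - sv (c * cZ l l * q^(2*l)) (ev (M (Suc l) (Suc l) (Suc l) r s t)))"
    by (simp add: fun_eq_iff sv_apply c1 algebra_simps)
  have "lowdeg (Suc (Suc (Suc d))) (RO w - sv (c * q^(2 * l + 1)) (ev (M (Suc l) (Suc l) (Suc l) r s t)))"
    unfolding e using rest aX[unfolded approx_def] by (intro lowdeg_add lowdeg_sv)
  then show ?thesis by (simp add: approx_def)
qed

lemma vfin_RO[simp]: "vfin w \<Longrightarrow> vfin (RO w)"
  by (simp add: RO_def)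

lemma RO_base: "approx 2 (RO (ev (M 0 0 0 r s t))) q (M 1 1 1 r s t)"
proof -
  let ?e = "ev (M 0 0 0 r s t) :: 'a vec"
  have z: "Zop ?e = ev (M 0 0 1 r s t)" by (simp add: Zop_def Zm_00)
  have aZ: "approx 0 (Zop ?e) 1 (M 0 0 1 r s t)" unfolding z by (rule approx_ev) simp
  have aY: "approx (Suc 0) (Yop (Zop ?e)) (1 * q^(2*0)) (M 0 (Suc 0) 1 r s t)"
    by (rule approx_Y[OF vfin_Z[OF vfin_ev] aZ]) simp
  have aX: "approx (Suc (Suc 0)) (XX (Yop (Zop ?e))) (1 * q^(2*0)) (M (Suc 0) (Suc 0) 1 r s t)"
    by (rule approx_X[OF aY])
  have rest: "lowdeg (Suc (Suc 0)) (RO ?e - sv q (XX (Yop (Zop ?e))))"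
    by (rule RO_rest) (simp add: lowdeg_ev)
  have e: "RO ?e - sv q (ev (M 1 1 1 r s t)) =
      (RO ?e - sv q (XX (Yop (Zop ?e)))) + sv q (XX (Yop (Zop ?e)) - sv (1 * q^(2*0)) (ev (M (Suc 0) (Suc 0) 1 r s t)))"
    by (simp add: fun_eq_iff sv_apply algebra_simps)
  have "lowdeg 2 (RO ?e - sv q (ev (M 1 1 1 r s t)))"
    unfolding e using rest aX[unfolded approx_def] by (simp add: lowdeg_add lowdeg_sv numeral_2_eq_2)
  then show ?thesis by (simp add: approx_def)
qed

fun kap :: "nat \<Rightarrow> 'a" where
  "kap 0 = 1" | "kap (Suc l) = kap l * q^(2 * l + 1)"

lemma kap_nz: "kap l \<noteq> 0" using q0 by (induction l) auto

lemma RO_pow: "approx (3 * Suc l - 1) ((RO ^^ Suc l) (ev (M 0 0 0 r s t))) (kap (Suc l)) (M (Suc l) (Suc l) (Suc l) r s t)"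
proof (induction l)
  case 0 then show ?case using RO_base by simp
next
  case (Suc l)
  have v: "vfin ((RO ^^ Suc l) (ev (M 0 0 0 r s t)))"
  proof -
    have "\<And>n. vfin ((RO ^^ n) (ev (M 0 0 0 r s t)))" by (induct_tac n) auto
    then show ?thesis .
  qed
  have h: "approx (Suc (Suc (Suc (3 * Suc l - 1)))) (RO ((RO ^^ Suc l) (ev (M 0 0 0 r s t)))) (kap (Suc l) * q^(2 * Suc l + 1)) (M (Suc (Suc l)) (Suc (Suc l)) (Suc (Suc l)) r s t)"
    by (rule RO_step[OF v Suc.IH]) simp
  have eq: "3 * Suc (Suc l) - 1 = Suc (Suc (Suc (3 * Suc l - 1)))" by simp
  show ?case using h unfolding eq funpow.simps(2) o_apply kap.simps(2) by assumption
qed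

definition "topv n w c m \<longleftrightarrow> lowdeg n w \<and> (\<forall>m'. deg m' = n \<longrightarrow> w m' = (if m' = m then c else 0))"

lemma top_RO: "topv (3 * l) ((RO ^^ l) (ev (M 0 0 0 r s t))) (kap l) (M l l l r s t)"
proof (cases l)
  case 0 then show ?thesis by (simp add: topv_def lowdeg_def ev_def)
next
  case (Suc l')
  have a: "approx (3 * Suc l' - 1) ((RO ^^ Suc l') (ev (M 0 0 0 r s t))) (kap (Suc l')) (M (Suc l') (Suc l') (Suc l') r s t)"
    by (rule RO_pow)
  have low: "lowdeg (3 * Suc l') ((RO ^^ Suc l') (ev (M 0 0 0 r s t)))"
    by (rule approx_low[OF a]) simp_all
  have "\<And>m'. deg m' = 3 * Suc l' \<Longrightarrow> (RO ^^ Suc l') (ev (M 0 0 0 r s t)) m' = (if m' = M (Suc l') (Suc l') (Suc l') r s t then kap (Suc l') else 0)"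
    by (rule approx_at[OF a]) simp
  then show ?thesis using Suc low by (simp add: topv_def)
qed

definition Qp :: "mon \<Rightarrow> 'a ncpoly" where
  "Qp m = (case m of M i j k r s t \<Rightarrow> npow (aw_Omega q) i \<otimes> (npow (aw_alpha q) r \<otimes> (npow (aw_beta q) s \<otimes> npow (aw_gamma q) t)))"

lemma fin_Qp[simp]: "fin (Qp m)" by (cases m) (simp add: Qp_def)

lemma rho_npow_Omega: "vfin w \<Longrightarrow> rho (npow (aw_Omega q) n) w = (RO ^^ n) w"
proof (induction n)
  case 0 then show ?case by (simp add: rho_one)
next
  case (Suc n)
  have "\<And>n. vfin ((RO ^^ n) w)" by (induct_tac n) (auto simp: Suc.prems)
  then show ?case using Suc by (simp add: rho_mult rho_Omega)
qed

lemma nf_Qp: "nf (Qp (M i j k r s t)) = (RO ^^ i) (ev (M 0 0 0 r s t))"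
  by (simp add: Qp_def nf_def rho_mult rho_npow_Omega rho_npow_alpha rho_npow_beta rho_npow_gamma cs_cs shiftop_ev inj_cs)

lemma subalg_smult: "y \<in> gen_subalg q \<Longrightarrow> c \<cdot> y \<in> gen_subalg q"
proof -
  assume y: "y \<in> gen_subalg q"
  have "(c \<cdot> nc_one) \<otimes> y \<in> gen_subalg q" using y by (intro gen_subalg.mult gen_subalg.scal)
  then show ?thesis by (simp add: mult_smult_left mult_one_left)
qed

lemma subalg_zero: "0 \<in> gen_subalg q"
  using gen_subalg.scal[of 0 q] by (simp add: smult_zero)

lemma subalg_add: "x \<in> gen_subalg q \<Longrightarrow> y \<in> gen_subalg q \<Longrightarrow> x + y \<in> gen_subalg q"
  using gen_subalg.add by (metis nc_add_eq)

lemma subalg_sum: "(\<And>i. i \<in> S \<Longrightarrow> f i \<in> gen_subalg q) \<Longrightarrow> sum f S \<in> gen_subalg q"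
  by (induction S rule: infinite_finite_induct) (auto simp: subalg_zero subalg_add)

lemma subalg_npow: "p \<in> gen_subalg q \<Longrightarrow> npow p n \<in> gen_subalg q"
proof (induction n)
  case 0 then show ?case using gen_subalg.scal[of 1 q] by (simp add: smult_one)
next
  case (Suc n) then show ?case by (simp add: gen_subalg.mult)
qed

lemma subalg_Qp: "Qp m \<in> gen_subalg q"
  by (cases m) (simp add: Qp_def gen_subalg.mult subalg_npow gen_subalg.Om gen_subalg.al gen_subalg.be gen_subalg.ga)

lemma center_ideal: assumes x: "x \<in> aw_ideal q" shows "x \<in> aw_center q"
proof -
  have "\<And>y. fin y \<Longrightarrow> x \<otimes> y - y \<otimes> x \<in> aw_ideal q"
    using x by (intro ideal_diff ideal_lmult ideal_rmult)
  then show ?thesis using ideal_fin[OF x] unfolding aw_center_def by simp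
qed

lemma center_smult: "x \<in> aw_center q \<Longrightarrow> c \<cdot> x \<in> aw_center q"
  using center_mult[OF center_scal] by (metis mult_smult_left mult_one_left)

lemma center_diff: "x \<in> aw_center q \<Longrightarrow> y \<in> aw_center q \<Longrightarrow> x - y \<in> aw_center q"
  using center_add[OF _ center_smult[where x=y and c="-1"]] by (simp add: smult_minus1)

lemma nf_diff: "fin x \<Longrightarrow> fin y \<Longrightarrow> nf (x - y) = nf x - nf y"
  by (simp add: nf_def rho_diff)

lemma nf_sum: "(\<And>i. i \<in> S \<Longrightarrow> fin (f i)) \<Longrightarrow> nf (sum f S) = (\<Sum>i\<in>S. nf (f i))"
  by (simp add: nf_def rho_sum)

lemma nf_smult: "fin x \<Longrightarrow> nf (c \<cdot> x) = sv c (nf x)"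
  by (simp add: nf_def rho_smult)

end

context aw2 begin

lemma main_step:
  assumes x: "x \<in> aw_center q" and low: "\<And>m. nf x m \<noteq> 0 \<Longrightarrow> deg m < Suc n"
  shows "\<exists>s\<in>gen_subalg q. x - s \<in> aw_center q \<and> (\<forall>m. nf (x - s) m \<noteq> 0 \<longrightarrow> deg m < n)"
proof -
  let ?v = "nf x"
  define T where "T = {m. ?v m \<noteq> 0 \<and> deg m = n}"
  have fT: "finite T" using vfin_nf[of x] unfolding T_def vfin_def by (rule finite_subset[rotated]) auto
  have lowv: "lowdeg n ?v" using low by (auto simp: lowdeg_def less_Suc_eq_le)
  define lv where "lv m = (case m of M i j k r s t \<Rightarrow> i)" for m
  define s where "s = (\<Sum>m\<in>T. (?v m * inverse (kap (lv m))) \<cdot> Qp m)"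
  have sS: "s \<in> gen_subalg q" unfolding s_def by (intro subalg_sum subalg_smult subalg_Qp)
  have sC: "s \<in> aw_center q" using subalg_center[OF center_Omega sS] .
  have fx: "fin x" using x by (rule center_fin)
  have top: "\<And>m. m \<in> T \<Longrightarrow> topv n (nf (Qp m)) (kap (lv m)) m"
  proof -
    fix m assume mT: "m \<in> T"
    obtain i j k r s t where m: "m = M i j k r s t" by (cases m)
    have "j = i \<and> k = j" using top_form[OF x lowv] mT m by (auto simp: T_def)
    then have m': "m = M i i i r s t" and n: "n = 3 * i" using mT m by (auto simp: T_def)
    show "topv n (nf (Qp m)) (kap (lv m)) m"
      using top_RO[of i r s t] by (simp add: m' n nf_Qp lv_def)
  qed
  have nfs: "nf s = (\<Sum>m\<in>T. sv (?v m * inverse (kap (lv m))) (nf (Qp m)))"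
    unfolding s_def by (simp add: nf_sum nf_smult)
  have claim: "\<And>m'. n \<le> deg m' \<Longrightarrow> nf (x - s) m' = 0"
  proof -
    fix m' assume dm: "n \<le> deg m'"
    have eq: "nf (x - s) m' = ?v m' - (\<Sum>m\<in>T. ?v m * inverse (kap (lv m)) * nf (Qp m) m')"
    proof -
      have fs: "fin s" unfolding s_def by simp
      have "nf (x - s) = nf x - nf s" using fx fs by (rule nf_diff)
      then show ?thesis by (simp add: nfs sum_fun_apply sv_apply)
    qed
    show "nf (x - s) m' = 0"
    proof (cases "deg m' = n")
      case True
      have "(\<Sum>m\<in>T. ?v m * inverse (kap (lv m)) * nf (Qp m) m') =
            (\<Sum>m\<in>T. if m = m' then ?v m' else 0)"
      proof (rule sum.cong)
        fix m assume mT: "m \<in> T"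
        have "nf (Qp m) m' = (if m' = m then kap (lv m) else 0)" using top[OF mT] True by (simp add: topv_def)
        then show "?v m * inverse (kap (lv m)) * nf (Qp m) m' = (if m = m' then ?v m' else 0)"
          using kap_nz by auto
      qed simp
      also have "\<dots> = (if m' \<in> T then ?v m' else 0)" using fT by (simp add: sum.delta')
      also have "\<dots> = ?v m'" using True by (auto simp: T_def)
      finally show ?thesis using eq by simp
    next
      case False
      then have gt: "n < deg m'" using dm by simp
      have "?v m' = 0" using lowv gt by (auto simp: lowdeg_def)
      moreover have "\<And>m. m \<in> T \<Longrightarrow> nf (Qp m) m' = 0" using top gt by (fastforce simp: topv_def lowdeg_def)
      ultimately show ?thesis using eq by simp
    qed
  qed
  show ?thesis
  proof (intro bexI[OF _ sS] conjI allI impI)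
    show "x - s \<in> aw_center q" by (rule center_diff[OF x sC])
    fix m assume "nf (x - s) m \<noteq> 0"
    then show "deg m < n" using claim by (meson not_le)
  qed
qed

lemma main: "\<forall>x. x \<in> aw_center q \<longrightarrow> (\<forall>m. nf x m \<noteq> 0 \<longrightarrow> deg m < N) \<longrightarrow> (\<exists>s\<in>gen_subalg q. x - s \<in> aw_ideal q)"
proof (induction N)
  case 0
  show ?case
  proof (intro allI impI)
    fix x assume x: "x \<in> aw_center q" and "\<forall>m. nf x m \<noteq> 0 \<longrightarrow> deg m < 0"
    then have "nf x = 0" by (auto simp: fun_eq_iff)
    then have "x \<in> aw_ideal q" using ideal_iff center_fin[OF x] by blast
    then show "\<exists>s\<in>gen_subalg q. x - s \<in> aw_ideal q" using subalg_zero by force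
  qed
next
  case (Suc n)
  show ?case
  proof (intro allI impI)
    fix x assume x: "x \<in> aw_center q" and low: "\<forall>m. nf x m \<noteq> 0 \<longrightarrow> deg m < Suc n"
    obtain s where sS: "s \<in> gen_subalg q" and c: "x - s \<in> aw_center q" and l: "\<forall>m. nf (x - s) m \<noteq> 0 \<longrightarrow> deg m < n"
      using main_step[OF x] low by blast
    obtain s' where s'S: "s' \<in> gen_subalg q" and i: "(x - s) - s' \<in> aw_ideal q"
      using Suc c l by blast
    have "x - (s' + s) \<in> aw_ideal q" using i by (simp add: algebra_simps)
    then show "\<exists>s\<in>gen_subalg q. x - s \<in> aw_ideal q" using subalg_add[OF s'S sS] by blast
  qed
qed

theorem result: "aw_center q = {x. fin x \<and> (\<exists>s\<in>gen_subalg q. x \<ominus> s \<in> aw_ideal q)}"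
proof (intro set_eqI iffI)
  fix x assume x: "x \<in> aw_center q"
  have fx: "fin x" using x by (rule center_fin)
  have "finite (deg ` {m. nf x m \<noteq> 0})" using vfin_nf[of x] by (simp add: vfin_def)
  then obtain N where N: "\<forall>d\<in>deg ` {m. nf x m \<noteq> 0}. d < N" using finite_nat_set_iff_bounded by blast
  then have "\<forall>m. nf x m \<noteq> 0 \<longrightarrow> deg m < N" by auto
  then show "x \<in> {x. fin x \<and> (\<exists>s\<in>gen_subalg q. x \<ominus> s \<in> aw_ideal q)}"
    using main x fx by auto
next
  fix x assume "x \<in> {x. fin x \<and> (\<exists>s\<in>gen_subalg q. x \<ominus> s \<in> aw_ideal q)}"
  then obtain s where fx: "fin x" and sS: "s \<in> gen_subalg q" and i: "x - s \<in> aw_ideal q" by auto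
  have "(x - s) + s \<in> aw_center q"
    by (rule center_add[OF center_ideal[OF i] subalg_center[OF center_Omega sS]])
  then show "x \<in> aw_center q" by simp
qed

end

theorem corollary8p3:
  fixes q :: "'a::field"
  assumes "q \<noteq> 0" and "q ^ 4 \<noteq> 1"
    and "\<forall>n::nat. n > 0 \<longrightarrow> q ^ n \<noteq> 1"
  shows "aw_center q = {x. fin x \<and> (\<exists>s\<in>gen_subalg q. x \<ominus> s \<in> aw_ideal q)}"
proof -
  interpret aw2 q using assms by unfold_locales auto
  show ?thesis by (rule result)
qed


end
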